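(* Let $(G,\mathcal{P})$ be a group pair and let $S$ be a finite generating set of $G$. Then $(G,\mathcal{P})$ is relatively finitely presented if and only if the coned-off Cayley graph $\hat\Gamma(G,\mathcal{P},S)$ is coarsely unicone simply-connected.
   Context: A group pair $(G,\mathcal{P})$: $G$ finitely generated, $\mathcal{P}$ a non-empty finite collection of subgroups (repetitions allowed); $G/\mathcal{P}=\coprod_{P\in\mathcal{P}}G/P$. For $S'\subseteq G$ let $\varphi\colon F(S')*\mathop{\ast}_{P\in\mathcal{P}}P\to G$ be induced by inclusions; $(G,\mathcal{P})$ is relatively finitely presented if there exist finite $S'$ with $\varphi$ surjective and a finite subset $R$ of the free product normally generating $\ker\varphi$. The coned-off Cayley graph $\hat\Gamma(G,\mathcal{P},S)$ has vertex set $G\sqcup G/\mathcal{P}$, edges $\{g,g'\}$ for $g^{-1}g'\in S$, and edges $\{g,A\}$ for $g\in G$, $A\in G/\mathcal{P}$ with $g\in A$. Vertices in $G/\mathcal{P}$ are cone vertices. An edge loop of length $l$ is a sequence of vertices $v_1,\dots,v_l$ with $\{v_i,v_{i+1}\}$ and $\{v_l,v_1\}$ edges; it is unicone if it contains at most one cone vertex. $\hat\Gamma_l$ is the 2-complex obtained from $\hat\Gamma(G,\mathcal{P},S)$ by attaching a 2-cell along each unicone loop of length $<l$. The graph is coarsely unicone simply-connected if $\hat\Gamma_l$ is simply-connected for some $l\in\mathbb{N}$. *)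

theory Defs
  imports "HOL-Algebra.Algebra"
begin

text \<open>A group pair is given by a group G and a finite non-empty index set I with
  subgroups P i (i in I); repetitions are allowed since the family is indexed.
  Elements of the free product F(S') * (free product over i in I of P i) are represented
  by words over letters: Inl (s, True) is the free generator s, Inl (s, False) its
  formal inverse, and Inr (i, p) is the element p of the i-th factor P i.\<close>

type_synonym ('a, 'i) fp_letter = "('a \<times> bool) + ('i \<times> 'a)"

definition fp_word :: "'a set \<Rightarrow> 'i set \<Rightarrow> ('i \<Rightarrow> 'a set) \<Rightarrow> ('a, 'i) fp_letter list \<Rightarrow> bool" where
  "fp_word S' I P w \<longleftrightarrow>
     (\<forall>x \<in> set w. case x of Inl (s, b) \<Rightarrow> s \<in> S' | Inr (i, p) \<Rightarrow> i \<in> I \<and> p \<in> P i)"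

fun fp_letter_inv :: "('a, 'b) monoid_scheme \<Rightarrow> ('a, 'i) fp_letter \<Rightarrow> ('a, 'i) fp_letter" where
  "fp_letter_inv G (Inl (s, b)) = Inl (s, \<not> b)"
| "fp_letter_inv G (Inr (i, p)) = Inr (i, inv\<^bsub>G\<^esub> p)"

definition fp_word_inv :: "('a, 'b) monoid_scheme \<Rightarrow> ('a, 'i) fp_letter list \<Rightarrow> ('a, 'i) fp_letter list" where
  "fp_word_inv G w = rev (map (fp_letter_inv G) w)"

inductive fp_step :: "('a, 'b) monoid_scheme \<Rightarrow> ('a, 'i) fp_letter list \<Rightarrow> ('a, 'i) fp_letter list \<Rightarrow> bool"
  for G where
  cancel: "fp_step G (u @ [Inl (s, b), Inl (s, \<not> b)] @ v) (u @ v)"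
| merge: "fp_step G (u @ [Inr (i, p), Inr (i, q)] @ v) (u @ [Inr (i, p \<otimes>\<^bsub>G\<^esub> q)] @ v)"
| unit: "fp_step G (u @ [Inr (i, \<one>\<^bsub>G\<^esub>)] @ v) (u @ v)"

text \<open>Equality in the free product F(S') * (*_i P i): equivalence on words over S', I, P generated by the elementary relations.\<close>
definition fp_equiv :: "('a, 'b) monoid_scheme \<Rightarrow> 'a set \<Rightarrow> 'i set \<Rightarrow> ('i \<Rightarrow> 'a set)
    \<Rightarrow> ('a, 'i) fp_letter list \<Rightarrow> ('a, 'i) fp_letter list \<Rightarrow> bool" where
  "fp_equiv G S' I P =
     (symclp (\<lambda>u v. fp_word S' I P u \<and> fp_word S' I P v \<and> fp_step G u v))\<^sup>*\<^sup>*"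

inductive_set fp_normal_closure ::
  "('a, 'b) monoid_scheme \<Rightarrow> 'a set \<Rightarrow> 'i set \<Rightarrow> ('i \<Rightarrow> 'a set) \<Rightarrow> ('a, 'i) fp_letter list set
     \<Rightarrow> ('a, 'i) fp_letter list set"
  for G S' I P R where
  empty: "[] \<in> fp_normal_closure G S' I P R"
| conj: "\<lbrakk>w \<in> fp_normal_closure G S' I P R; r \<in> R; fp_word S' I P u\<rbrakk>
          \<Longrightarrow> u @ r @ fp_word_inv G u @ w \<in> fp_normal_closure G S' I P R"
| conj_inv: "\<lbrakk>w \<in> fp_normal_closure G S' I P R; r \<in> R; fp_word S' I P u\<rbrakk>
          \<Longrightarrow> u @ fp_word_inv G r @ fp_word_inv G u @ w \<in> fp_normal_closure G S' I P R"
| equiv: "\<lbrakk>w \<in> fp_normal_closure G S' I P R; fp_equiv G S' I P w w'\<rbrakk>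
          \<Longrightarrow> w' \<in> fp_normal_closure G S' I P R"

fun fp_letter_val :: "('a, 'b) monoid_scheme \<Rightarrow> ('a, 'i) fp_letter \<Rightarrow> 'a" where
  "fp_letter_val G (Inl (s, True)) = s"
| "fp_letter_val G (Inl (s, False)) = inv\<^bsub>G\<^esub> s"
| "fp_letter_val G (Inr (i, p)) = p"

fun fp_eval :: "('a, 'b) monoid_scheme \<Rightarrow> ('a, 'i) fp_letter list \<Rightarrow> 'a" where
  "fp_eval G [] = \<one>\<^bsub>G\<^esub>"
| "fp_eval G (x # w) = fp_letter_val G x \<otimes>\<^bsub>G\<^esub> fp_eval G w"

definition rel_fin_presented :: "('a, 'b) monoid_scheme \<Rightarrow> 'i set \<Rightarrow> ('i \<Rightarrow> 'a set) \<Rightarrow> bool" where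
  "rel_fin_presented G I P \<longleftrightarrow>
     (\<exists>S'. finite S' \<and> S' \<subseteq> carrier G
        \<and> (\<forall>g \<in> carrier G. \<exists>w. fp_word S' I P w \<and> fp_eval G w = g)
        \<and> (\<exists>R. finite R \<and> (\<forall>r \<in> R. fp_word S' I P r)
             \<and> (\<forall>w. fp_word S' I P w \<longrightarrow>
                    (fp_eval G w = \<one>\<^bsub>G\<^esub> \<longleftrightarrow> w \<in> fp_normal_closure G S' I P R))))"

text \<open>Vertices: Inl g for g in G, and cone vertices Inr (i, g P_i) for the left cosets of P i,
  forming the disjoint union over i in I of G / P_i.\<close>

definition cone_vertices :: "('a, 'b) monoid_scheme \<Rightarrow> 'i set \<Rightarrow> ('i \<Rightarrow> 'a set) \<Rightarrow> ('a + ('i \<times> 'a set)) set" where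
  "cone_vertices G I P = {Inr (i, g <#\<^bsub>G\<^esub> P i) | i g. i \<in> I \<and> g \<in> carrier G}"

definition coned_V :: "('a, 'b) monoid_scheme \<Rightarrow> 'i set \<Rightarrow> ('i \<Rightarrow> 'a set) \<Rightarrow> ('a + ('i \<times> 'a set)) set" where
  "coned_V G I P = Inl ` carrier G \<union> cone_vertices G I P"

definition coned_adj :: "('a, 'b) monoid_scheme \<Rightarrow> 'i set \<Rightarrow> ('i \<Rightarrow> 'a set) \<Rightarrow> 'a set
    \<Rightarrow> ('a + ('i \<times> 'a set)) \<Rightarrow> ('a + ('i \<times> 'a set)) \<Rightarrow> bool" where
  "coned_adj G I P S u v \<longleftrightarrow> u \<in> coned_V G I P \<and> v \<in> coned_V G I P \<and>
     (case (u, v) of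
        (Inl g, Inl h) \<Rightarrow> inv\<^bsub>G\<^esub> g \<otimes>\<^bsub>G\<^esub> h \<in> S \<or> inv\<^bsub>G\<^esub> h \<otimes>\<^bsub>G\<^esub> g \<in> S
      | (Inl g, Inr (i, A)) \<Rightarrow> g \<in> A
      | (Inr (i, A), Inl g) \<Rightarrow> g \<in> A
      | (Inr _, Inr _) \<Rightarrow> False)"

definition edge_loop :: "('v \<Rightarrow> 'v \<Rightarrow> bool) \<Rightarrow> 'v list \<Rightarrow> bool" where
  "edge_loop adj vs \<longleftrightarrow> vs \<noteq> [] \<and>
     (\<forall>k < length vs. adj (vs ! k) (vs ! (Suc k mod length vs)))"

definition unicone :: "('a + 'c) list \<Rightarrow> bool" where
  "unicone vs \<longleftrightarrow> card {v \<in> set vs. \<exists>c. v = Inr c} \<le> 1"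

definition edge_path :: "'v set \<Rightarrow> ('v \<Rightarrow> 'v \<Rightarrow> bool) \<Rightarrow> 'v list \<Rightarrow> bool" where
  "edge_path V adj p \<longleftrightarrow> p \<noteq> [] \<and> set p \<subseteq> V \<and>
     (\<forall>k. Suc k < length p \<longrightarrow> adj (p ! k) (p ! Suc k))"

text \<open>Elementary combinatorial homotopies of edge paths in the 2-complex obtained from the graph
  by attaching 2-cells along the loops in C: removing a backtrack, or inserting the boundary
  loop of a 2-cell.\<close>
inductive htpy_step :: "('v \<Rightarrow> 'v \<Rightarrow> bool) \<Rightarrow> 'v list set \<Rightarrow> 'v list \<Rightarrow> 'v list \<Rightarrow> bool"
  for adj C where
  backtrack: "adj a b \<Longrightarrow> htpy_step adj C (p @ [a, b, a] @ q) (p @ [a] @ q)"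
| cell: "\<lbrakk>c \<in> C; c \<noteq> []\<rbrakk> \<Longrightarrow> htpy_step adj C (p @ [hd c] @ q) (p @ c @ [hd c] @ q)"

definition edge_htpy :: "('v \<Rightarrow> 'v \<Rightarrow> bool) \<Rightarrow> 'v list set \<Rightarrow> 'v list \<Rightarrow> 'v list \<Rightarrow> bool" where
  "edge_htpy adj C = (symclp (htpy_step adj C))\<^sup>*\<^sup>*"

text \<open>Simple connectivity of the 2-complex (graph (V, adj) plus 2-cells along the loops in C),
  via the edge-path group: connected, and every closed edge path is homotopic to a constant one.\<close>
definition complex_simply_connected :: "'v set \<Rightarrow> ('v \<Rightarrow> 'v \<Rightarrow> bool) \<Rightarrow> 'v list set \<Rightarrow> bool" where
  "complex_simply_connected V adj C \<longleftrightarrow>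
     V \<noteq> {} \<and>
     (\<forall>u \<in> V. \<forall>v \<in> V. \<exists>p. edge_path V adj p \<and> hd p = u \<and> last p = v) \<and>
     (\<forall>p. edge_path V adj p \<and> hd p = last p \<longrightarrow> edge_htpy adj C p [hd p])"

definition unicone_cells :: "('a, 'b) monoid_scheme \<Rightarrow> 'i set \<Rightarrow> ('i \<Rightarrow> 'a set) \<Rightarrow> 'a set \<Rightarrow> nat
    \<Rightarrow> ('a + ('i \<times> 'a set)) list set" where
  "unicone_cells G I P S l =
     {c. edge_loop (coned_adj G I P S) c \<and> unicone c \<and> length c < l}"

definition coarsely_unicone_simply_connected ::
    "('a, 'b) monoid_scheme \<Rightarrow> 'i set \<Rightarrow> ('i \<Rightarrow> 'a set) \<Rightarrow> 'a set \<Rightarrow> bool" where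
  "coarsely_unicone_simply_connected G I P S \<longleftrightarrow>
     (\<exists>l::nat. complex_simply_connected (coned_V G I P) (coned_adj G I P S) (unicone_cells G I P S l))"

end

theory Submission
  imports Defs
begin


lemma rtranclp_symclp_lift:
  assumes "\<And>x y. r x y \<Longrightarrow> (symclp r')\<^sup>*\<^sup>* (f x) (f y)"
    and "(symclp r)\<^sup>*\<^sup>* x y"
  shows "(symclp r')\<^sup>*\<^sup>* (f x) (f y)"
  using assms(2)
proof (induction rule: rtranclp_induct)
  case base then show ?case by simp
next
  case (step y z)
  from step(2) have "(symclp r')\<^sup>*\<^sup>* (f y) (f z)"
  proof cases
    case base then show ?thesis by (rule assms(1))
  next
    case sym then show ?thesis by (rule rtranclp_symclp_sym[OF assms(1)])
  qed
  then show ?case by (rule rtranclp_trans[OF step.IH])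
qed

lemma rtranclp_symclp_lift_inv:
  assumes "\<And>x y. r x y \<Longrightarrow> Q x \<Longrightarrow> Q y \<Longrightarrow> (symclp r')\<^sup>*\<^sup>* (f x) (f y)"
    and "\<And>x y. r x y \<Longrightarrow> Q x \<longleftrightarrow> Q y"
    and "(symclp r)\<^sup>*\<^sup>* x y" and "Q x"
  shows "(symclp r')\<^sup>*\<^sup>* (f x) (f y) \<and> Q y"
  using assms(3,4)
proof (induction rule: rtranclp_induct)
  case base then show ?case by simp
next
  case (step y z)
  have Qy: "Q y" using step.IH step.prems by simp
  from step(2) have "(symclp r')\<^sup>*\<^sup>* (f y) (f z) \<and> Q z"
  proof cases
    case base
    then have "Q z" using assms(2) Qy by simp
    with base show ?thesis using assms(1) Qy by simp
  next
    case sym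
    then have "Q z" using assms(2) Qy by simp
    with sym show ?thesis using assms(1) Qy rtranclp_symclp_sym by metis
  qed
  then show ?case using step.IH step.prems rtranclp_trans by metis
qed

lemma htpy_step_cong:
  assumes "htpy_step adj C p q" shows "htpy_step adj C (x @ p @ y) (x @ q @ y)"
  using assms
proof cases
  case (backtrack a b u v)
  then show ?thesis using htpy_step.backtrack[of adj a b C "x @ u" "v @ y"] by simp
next
  case (cell c u v)
  then show ?thesis using htpy_step.cell[of c C adj "x @ u" "v @ y"] by simp
qed

lemma edge_htpy_refl[simp]: "edge_htpy adj C p p"
  by (simp add: edge_htpy_def)

lemma edge_htpy_sym: "edge_htpy adj C p q \<Longrightarrow> edge_htpy adj C q p"
  unfolding edge_htpy_def by (rule rtranclp_symclp_sym)

lemma edge_htpy_trans: "edge_htpy adj C p q \<Longrightarrow> edge_htpy adj C q r \<Longrightarrow> edge_htpy adj C p r"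
  unfolding edge_htpy_def by (rule rtranclp_trans)

lemma edge_htpy_step: "htpy_step adj C p q \<Longrightarrow> edge_htpy adj C p q"
  unfolding edge_htpy_def by (simp add: r_into_rtranclp symclpI)

lemma edge_htpy_cong: "edge_htpy adj C p q \<Longrightarrow> edge_htpy adj C (x @ p @ y) (x @ q @ y)"
  unfolding edge_htpy_def
  by (rule rtranclp_symclp_lift[where f="\<lambda>p. x @ p @ y"])
     (auto intro: r_into_rtranclp symclpI htpy_step_cong)

lemma edge_htpy_bt: "adj a b \<Longrightarrow> edge_htpy adj C (x @ [a, b, a] @ y) (x @ [a] @ y)"
  by (rule edge_htpy_step) (rule htpy_step.backtrack)

lemma edge_htpy_cell: "c \<in> C \<Longrightarrow> c \<noteq> [] \<Longrightarrow> edge_htpy adj C (x @ [hd c] @ y) (x @ c @ [hd c] @ y)"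
  by (rule edge_htpy_step) (rule htpy_step.cell)

lemma edge_htpy_mono:
  assumes "edge_htpy adj C p q" "C \<subseteq> C'" shows "edge_htpy adj C' p q"
proof -
  have "(symclp (htpy_step adj C'))\<^sup>*\<^sup>* (id p) (id q)"
  proof (rule rtranclp_symclp_lift[where f=id])
    fix x y assume "htpy_step adj C x y"
    then have "htpy_step adj C' x y"
    proof cases
      case (backtrack a b u v) then show ?thesis using htpy_step.backtrack[of adj a b C' u v] by simp
    next
      case (cell c u v) then show ?thesis using assms(2) htpy_step.cell[of c C' adj u v] by auto
    qed
    then show "(symclp (htpy_step adj C'))\<^sup>*\<^sup>* (id x) (id y)" by (simp add: r_into_rtranclp)
  next
    show "(symclp (htpy_step adj C))\<^sup>*\<^sup>* p q" using assms(1) unfolding edge_htpy_def .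
  qed
  then show ?thesis unfolding edge_htpy_def by simp
qed

lemma edge_loop_succ: "edge_loop adj c \<longleftrightarrow> c \<noteq> [] \<and> successively adj (c @ [hd c])"
proof -
  have "successively adj (c @ [hd c]) \<longleftrightarrow> (\<forall>k < length c. adj (c ! k) (c ! (Suc k mod length c)))"
    if "c \<noteq> []"
  proof -
    have "(c @ [hd c]) ! Suc k = c ! (Suc k mod length c)" if "k < length c" for k
      using \<open>c \<noteq> []\<close> that
      by (cases "Suc k = length c") (auto simp: nth_append hd_conv_nth)
    moreover have "(c @ [hd c]) ! k = c ! k" if "k < length c" for k
      using that by (simp add: nth_append)
    ultimately have eq: "\<And>k. k < length c \<Longrightarrow> adj ((c @ [hd c]) ! k) ((c @ [hd c]) ! Suc k) = adj (c ! k) (c ! (Suc k mod length c))"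
      by presburger
    show ?thesis unfolding successively_conv_nth length_append_singleton Suc_less_eq
      using eq by blast
  qed
  then show ?thesis unfolding edge_loop_def by auto
qed

lemma edge_path_succ: "edge_path V adj p \<longleftrightarrow> p \<noteq> [] \<and> set p \<subseteq> V \<and> successively adj p"
  unfolding edge_path_def successively_conv_nth by auto


type_synonym ('a, 'i) vtx = "'a + ('i \<times> 'a set)"

locale cpair = group G for G :: "('a, 'b) monoid_scheme" (structure) +
  fixes I :: "'i set" and P :: "'i \<Rightarrow> 'a set" and S :: "'a set"
  assumes subg: "\<And>i. i \<in> I \<Longrightarrow> subgroup (P i) G" and S_car: "S \<subseteq> carrier G"
begin

abbreviation "adj \<equiv> coned_adj G I P S"
abbreviation "V \<equiv> coned_V G I P"

lemma inv_cancel_l[simp]: "x \<in> carrier G \<Longrightarrow> y \<in> carrier G \<Longrightarrow> inv x \<otimes> (x \<otimes> y) = y"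
  by (simp add: m_assoc[symmetric])

lemma inv_cancel_l2[simp]: "x \<in> carrier G \<Longrightarrow> y \<in> carrier G \<Longrightarrow> x \<otimes> (inv x \<otimes> y) = y"
  by (simp add: m_assoc[symmetric])

fun lcar :: "('a, 'i) fp_letter \<Rightarrow> bool" where
  "lcar (Inl (s, b)) = (s \<in> carrier G)"
| "lcar (Inr (i, p)) = (p \<in> carrier G)"

definition cw :: "('a, 'i) fp_letter list \<Rightarrow> bool" where
  "cw w \<longleftrightarrow> (\<forall>x \<in> set w. lcar x)"

lemma cw_simps[simp]: "cw []" "cw (x # w) \<longleftrightarrow> lcar x \<and> cw w" "cw (u @ w) \<longleftrightarrow> cw u \<and> cw w"
  by (auto simp: cw_def)

lemma val_Inl[simp]: "fp_letter_val G (Inl (s, b)) = (if b then s else inv s)"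
  by (cases b) auto

lemma val_car[simp]: "lcar x \<Longrightarrow> fp_letter_val G x \<in> carrier G"
  by (cases x rule: lcar.cases) auto

lemma eval_car[simp]: "cw w \<Longrightarrow> fp_eval G w \<in> carrier G"
  by (induction w) auto

lemma eval_append: "cw u \<Longrightarrow> cw w \<Longrightarrow> fp_eval G (u @ w) = fp_eval G u \<otimes> fp_eval G w"
  by (induction u) (auto simp: m_assoc)

lemma lcar_inv[simp]: "lcar x \<Longrightarrow> lcar (fp_letter_inv G x)"
  by (cases x rule: lcar.cases) auto

lemma val_inv[simp]: "lcar x \<Longrightarrow> fp_letter_val G (fp_letter_inv G x) = inv (fp_letter_val G x)"
  by (cases x rule: lcar.cases) auto

lemma letter_inv_inv[simp]: "lcar x \<Longrightarrow> fp_letter_inv G (fp_letter_inv G x) = x"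
  by (cases x rule: lcar.cases) auto

lemma winv_simps[simp]: "fp_word_inv G [] = []"
  "fp_word_inv G (x # w) = fp_word_inv G w @ [fp_letter_inv G x]"
  "fp_word_inv G (u @ w) = fp_word_inv G w @ fp_word_inv G u"
  by (auto simp: fp_word_inv_def)

lemma cw_winv[simp]: "cw w \<Longrightarrow> cw (fp_word_inv G w)"
  by (induction w) auto

lemma eval_winv: "cw w \<Longrightarrow> fp_eval G (fp_word_inv G w) = inv (fp_eval G w)"
  by (induction w) (auto simp: eval_append inv_mult_group)

lemma winv_winv[simp]: "cw w \<Longrightarrow> fp_word_inv G (fp_word_inv G w) = w"
  by (induction w) auto

lemma fp_word_simps[simp]: "fp_word S' I P []"
  "fp_word S' I P (Inl (s, b) # w) \<longleftrightarrow> s \<in> S' \<and> fp_word S' I P w"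
  "fp_word S' I P (Inr (i, p) # w) \<longleftrightarrow> i \<in> I \<and> p \<in> P i \<and> fp_word S' I P w"
  "fp_word S' I P (u @ w) \<longleftrightarrow> fp_word S' I P u \<and> fp_word S' I P w"
  by (auto simp: fp_word_def)

lemma fp_word_Cons: "fp_word S' I P (x # w) \<longleftrightarrow> fp_word S' I P [x] \<and> fp_word S' I P w"
  by (auto simp: fp_word_def)

lemma P_car: "i \<in> I \<Longrightarrow> p \<in> P i \<Longrightarrow> p \<in> carrier G"
  by (rule subgroup.mem_carrier[OF subg])

lemma fp_word_cw: "fp_word S' I P w \<Longrightarrow> S' \<subseteq> carrier G \<Longrightarrow> cw w"
proof (induction w)
  case (Cons x w)
  then show ?case by (cases x rule: lcar.cases) (auto simp: P_car)
qed simp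

lemma fp_word_winv: "fp_word S' I P w \<Longrightarrow> fp_word S' I P (fp_word_inv G w)"
proof (induction w)
  case (Cons x w)
  then show ?case
    by (cases x rule: lcar.cases) (auto simp: subgroup.m_inv_closed[OF subg])
qed simp

lemma V_Inl[simp]: "Inl g \<in> V \<longleftrightarrow> g \<in> carrier G"
  by (auto simp: coned_V_def cone_vertices_def)

lemma V_Inr: "Inr (i, A) \<in> V \<longleftrightarrow> (\<exists>g \<in> carrier G. i \<in> I \<and> A = g <# P i)"
  by (auto simp: coned_V_def cone_vertices_def)

lemma adj_LL: "adj (Inl g) (Inl h) \<longleftrightarrow> g \<in> carrier G \<and> h \<in> carrier G \<and> (inv g \<otimes> h \<in> S \<or> inv h \<otimes> g \<in> S)"
  by (auto simp: coned_adj_def)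

lemma adj_LR: "adj (Inl g) (Inr (i, A)) \<longleftrightarrow> g \<in> carrier G \<and> Inr (i, A) \<in> V \<and> g \<in> A"
  by (auto simp: coned_adj_def)

lemma adj_RL: "adj (Inr (i, A)) (Inl g) \<longleftrightarrow> g \<in> carrier G \<and> Inr (i, A) \<in> V \<and> g \<in> A"
  by (auto simp: coned_adj_def)

lemma adj_RR[simp]: "\<not> adj (Inr a) (Inr b)"
  by (simp add: coned_adj_def split: prod.splits)

lemma adj_sym: "adj u v \<Longrightarrow> adj v u"
  unfolding coned_adj_def by (auto split: sum.splits prod.splits)

lemma adj_V: "adj u v \<Longrightarrow> u \<in> V \<and> v \<in> V"
  by (simp add: coned_adj_def)

lemma coset_mem: "g \<in> carrier G \<Longrightarrow> p \<in> P i \<Longrightarrow> g \<otimes> p \<in> g <# P i"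
  unfolding l_coset_def by blast

lemma coset_self: "g \<in> carrier G \<Longrightarrow> i \<in> I \<Longrightarrow> g \<in> g <# P i"
  using coset_mem[of g "\<one>" i] subgroup.one_closed[OF subg] by simp

lemma coset_mult: "g \<in> carrier G \<Longrightarrow> i \<in> I \<Longrightarrow> p \<in> P i \<Longrightarrow> (g \<otimes> p) <# P i = g <# P i"
  using l_repr_independence[OF coset_mem _ subg] by simp

lemma coset_repr: "g \<in> k <# P i \<Longrightarrow> k \<in> carrier G \<Longrightarrow> i \<in> I \<Longrightarrow> g <# P i = k <# P i"
  using l_repr_independence[OF _ _ subg] by simp

lemma coset_diff: "g \<in> k <# P i \<Longrightarrow> h \<in> k <# P i \<Longrightarrow> k \<in> carrier G \<Longrightarrow> i \<in> I \<Longrightarrow> inv g \<otimes> h \<in> P i"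
proof -
  assume a: "g \<in> k <# P i" "h \<in> k <# P i" "k \<in> carrier G" "i \<in> I"
  then obtain p q where pq: "p \<in> P i" "q \<in> P i" "g = k \<otimes> p" "h = k \<otimes> q"
    unfolding l_coset_def by blast
  have pc: "p \<in> carrier G" "q \<in> carrier G" using pq a P_car by auto
  have "inv g \<otimes> h = inv p \<otimes> q"
    using pq pc a(3) by (simp add: inv_mult_group m_assoc)
  then show ?thesis using pq subgroup.m_closed[OF subg] subgroup.m_inv_closed[OF subg] a(4) by simp
qed

lemma Inr_adj: "adj (Inl g) (Inr (i, A)) \<Longrightarrow> i \<in> I \<and> A = g <# P i"
proof -
  assume "adj (Inl g) (Inr (i, A))"
  then obtain k where "g \<in> carrier G" "k \<in> carrier G" "i \<in> I" "A = k <# P i" "g \<in> A"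
    unfolding adj_LR V_Inr by blast
  then show ?thesis using coset_repr by simp
qed

end


context cpair begin

fun pre :: "'a \<Rightarrow> ('a, 'i) fp_letter \<Rightarrow> ('a, 'i) vtx list" where
  "pre g (Inl x) = [Inl g]"
| "pre g (Inr (i, p)) = [Inl g, Inr (i, g <# P i)]"

fun F :: "'a \<Rightarrow> ('a, 'i) fp_letter list \<Rightarrow> ('a, 'i) vtx list" where
  "F g [] = [Inl g]"
| "F g (x # w) = pre g x @ F (g \<otimes> fp_letter_val G x) w"

lemma pre_ne[simp]: "pre g x \<noteq> []"
  by (cases x rule: lcar.cases) auto

lemma hd_pre[simp]: "hd (pre g x) = Inl g"
  by (cases x rule: lcar.cases) auto

lemma F_ne[simp]: "F g w \<noteq> []"
  by (cases w) auto

lemma hd_F[simp]: "hd (F g w) = Inl g"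
  by (cases w) auto

lemma last_F: "g \<in> carrier G \<Longrightarrow> cw w \<Longrightarrow> last (F g w) = Inl (g \<otimes> fp_eval G w)"
  by (induction w arbitrary: g) (auto simp: m_assoc)

lemma F_append: "g \<in> carrier G \<Longrightarrow> cw x \<Longrightarrow> F g (x @ y) = butlast (F g x) @ F (g \<otimes> fp_eval G x) y"
  by (induction x arbitrary: g) (auto simp: m_assoc butlast_append)

lemma F_append2: "g \<in> carrier G \<Longrightarrow> cw x \<Longrightarrow> F g (x @ y) = F g x @ tl (F (g \<otimes> fp_eval G x) y)"
proof -
  assume a: "g \<in> carrier G" "cw x"
  have "F g x = butlast (F g x) @ [Inl (g \<otimes> fp_eval G x)]"
    using append_butlast_last_id[OF F_ne, of g x] last_F[OF a] by simp
  moreover have "F (g \<otimes> fp_eval G x) y = Inl (g \<otimes> fp_eval G x) # tl (F (g \<otimes> fp_eval G x) y)"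
    using hd_Cons_tl[OF F_ne] hd_F by metis
  ultimately show ?thesis using F_append[OF a] by (metis append.assoc append_Cons append_Nil)
qed

lemma adj_step_Inl: "g \<in> carrier G \<Longrightarrow> s \<in> S \<Longrightarrow> adj (Inl g) (Inl (g \<otimes> fp_letter_val G (Inl (s, b))))"
proof -
  assume a: "g \<in> carrier G" "s \<in> S"
  then have sc: "s \<in> carrier G" using S_car by auto
  show ?thesis
  proof (cases b)
    case True then show ?thesis using a sc by (simp add: adj_LL)
  next
    case False
    have "inv (g \<otimes> inv s) \<otimes> g = s" using a sc by (simp add: inv_mult_group m_assoc)
    then show ?thesis using False a sc by (simp add: adj_LL)
  qed
qed

lemma F_path: "fp_word S I P w \<Longrightarrow> g \<in> carrier G \<Longrightarrow> successively adj (F g w) \<and> set (F g w) \<subseteq> V"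
proof (induction w arbitrary: g)
  case Nil then show ?case by simp
next
  case (Cons x w)
  show ?case
  proof (cases x rule: lcar.cases)
    case (1 s b)
    then have s: "s \<in> S" "fp_word S I P w" using Cons.prems by auto
    then have sc: "s \<in> carrier G" using S_car by auto
    have "g \<otimes> fp_letter_val G x \<in> carrier G" using sc Cons.prems 1 by simp
    then show ?thesis using Cons.IH[OF s(2)] Cons.prems 1 adj_step_Inl[OF Cons.prems(2) s(1)]
      by (simp add: successively_Cons)
  next
    case (2 i p)
    then have s: "i \<in> I" "p \<in> P i" "fp_word S I P w" using Cons.prems by auto
    then have pc: "p \<in> carrier G" using P_car by auto
    have v: "Inr (i, g <# P i) \<in> V" using s Cons.prems by (auto simp: V_Inr)
    have a1: "adj (Inl g) (Inr (i, g <# P i))" using v Cons.prems s by (simp add: adj_LR coset_self)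
    have a2: "adj (Inr (i, g <# P i)) (Inl (g \<otimes> p))" using v Cons.prems s pc by (simp add: adj_RL coset_mem)
    show ?thesis using Cons.IH[OF s(3)] Cons.prems 2 a1 a2 v pc
      by (simp add: successively_Cons)
  qed
qed

lemma F_count: "length (filter (\<lambda>v. \<not> isl v) (F g w)) = length (filter (\<lambda>x. \<not> isl x) w)"
proof (induction w arbitrary: g)
  case (Cons x w) then show ?case by (cases x rule: lcar.cases) auto
qed simp

lemma F_length: "length (F g w) = Suc (length w + length (filter (\<lambda>x. \<not> isl x) w))"
proof (induction w arbitrary: g)
  case (Cons x w) then show ?case by (cases x rule: lcar.cases) auto
qed simp

definition lam :: "'a \<Rightarrow> 'a \<Rightarrow> ('a, 'i) fp_letter" where
  "lam g h = (if inv g \<otimes> h \<in> S then Inl (inv g \<otimes> h, True) else Inl (inv h \<otimes> g, False))"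

fun W :: "('a, 'i) vtx list \<Rightarrow> ('a, 'i) fp_letter list" where
  "W (Inl g # Inl h # r) = lam g h # W (Inl h # r)"
| "W (Inl g # Inr A # Inl h # r) = Inr (fst A, inv g \<otimes> h) # W (Inl h # r)"
| "W _ = []"

lemma lam_props: "adj (Inl g) (Inl h) \<Longrightarrow> fp_word S I P [lam g h] \<and> fp_letter_val G (lam g h) = inv g \<otimes> h \<and> isl (lam g h)"
  by (auto simp: lam_def adj_LL inv_mult_group)

lemma W_F: "p \<noteq> [] \<Longrightarrow> successively adj p \<Longrightarrow> hd p = Inl g \<Longrightarrow> isl (last p) \<Longrightarrow>
  fp_word S I P (W p) \<and> F g (W p) = p"
proof (induction p arbitrary: g rule: W.induct)
  case (1 g' h r)
  have g: "g' = g" using 1(4) by simp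
  have a: "adj (Inl g) (Inl h)" and s: "successively adj (Inl h # r)"
    using 1(3) g by (simp_all add: successively_Cons)
  have c: "g \<in> carrier G" "h \<in> carrier G" using a by (auto simp: adj_LL)
  have IH: "fp_word S I P (W (Inl h # r)) \<and> F h (W (Inl h # r)) = Inl h # r"
    using 1(1)[of h] s 1(5) by simp
  have l: "fp_word S I P [lam g h]" "fp_letter_val G (lam g h) = inv g \<otimes> h" "isl (lam g h)"
    using lam_props[OF a] by auto
  have "fp_word S I P (lam g h # W (Inl h # r))" using l(1) IH fp_word_Cons by blast
  moreover have "F g (lam g h # W (Inl h # r)) = Inl g # Inl h # r"
    using IH l(2,3) c by (cases "lam g h" rule: lcar.cases) auto
  ultimately show ?case using g by simp
next
  case (2 g' A h r)
  obtain i B where A: "A = (i, B)" by force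
  have g: "g' = g" using 2(4) by simp
  have a: "adj (Inl g) (Inr (i, B))" "adj (Inr (i, B)) (Inl h)" and s: "successively adj (Inl h # r)"
    using 2(3) g A by (simp_all add: successively_Cons)
  have iB: "i \<in> I" "B = g <# P i" using Inr_adj[OF a(1)] by auto
  have c: "g \<in> carrier G" "h \<in> carrier G" "h \<in> B" using a by (auto simp: adj_LR adj_RL)
  have d: "inv g \<otimes> h \<in> P i" using coset_diff[OF coset_self c(3)[unfolded iB]] c iB by simp
  have IH: "fp_word S I P (W (Inl h # r)) \<and> F h (W (Inl h # r)) = Inl h # r"
    using 2(1)[of h] s 2(5) by simp
  show ?case using IH g c d iB A by simp
qed (simp_all add: successively_Cons)

end


context cpair begin

abbreviation "Cl l \<equiv> unicone_cells G I P S l"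

lemma F_cong:
  assumes g: "g \<in> carrier G" and c: "cw x" "cw a" "cw b" and e: "fp_eval G a = fp_eval G b"
    and h: "edge_htpy adj C (F (g \<otimes> fp_eval G x) a) (F (g \<otimes> fp_eval G x) b)"
  shows "edge_htpy adj C (F g (x @ a @ y)) (F g (x @ b @ y))"
proof -
  have gx: "g \<otimes> fp_eval G x \<in> carrier G" using g c by simp
  have "F g (x @ a @ y) = butlast (F g x) @ F (g \<otimes> fp_eval G x) a @ tl (F (g \<otimes> fp_eval G x \<otimes> fp_eval G a) y)"
    using F_append[OF g c(1)] F_append2[OF gx c(2)] by simp
  moreover have "F g (x @ b @ y) = butlast (F g x) @ F (g \<otimes> fp_eval G x) b @ tl (F (g \<otimes> fp_eval G x \<otimes> fp_eval G a) y)"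
    using F_append[OF g c(1)] F_append2[OF gx c(3)] e by simp
  ultimately show ?thesis using edge_htpy_cong[OF h] by simp
qed

lemma F_pair_trivial:
  assumes "fp_word S I P [a]" "g \<in> carrier G"
  shows "edge_htpy adj C (F g [a, fp_letter_inv G a]) [Inl g]"
proof (cases a rule: lcar.cases)
  case (1 s b)
  then have s: "s \<in> S" "s \<in> carrier G" using assms S_car by auto
  have ad: "adj (Inl g) (Inl (g \<otimes> fp_letter_val G (Inl (s, b))))" using adj_step_Inl[OF assms(2) s(1)] .
  have e: "F g [a, fp_letter_inv G a] = [] @ [Inl g, Inl (g \<otimes> fp_letter_val G (Inl (s, b))), Inl g] @ []"
    using 1 s assms(2) by (simp add: m_assoc)
  have "edge_htpy adj C ([] @ [Inl g, Inl (g \<otimes> fp_letter_val G (Inl (s, b))), Inl g] @ []) ([] @ [Inl g] @ [])"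
    by (rule edge_htpy_bt[of adj, OF ad])
  then show ?thesis using e by (metis append_Nil append_Nil2)
next
  case (2 i p)
  then have ip: "i \<in> I" "p \<in> P i" "p \<in> carrier G" using assms P_car by auto
  have sc: "successively adj (F g [a])" using F_path[OF assms] by simp
  then have ad: "adj (Inl g) (Inr (i, g <# P i))" "adj (Inr (i, g <# P i)) (Inl (g \<otimes> p))"
    using 2 by (simp_all add: successively_Cons)
  have e: "F g [a, fp_letter_inv G a] = [Inl g] @ [Inr (i, g <# P i), Inl (g \<otimes> p), Inr (i, g <# P i)] @ [Inl g]"
    using 2 ip assms(2) by (simp add: m_assoc coset_mult)
  have "edge_htpy adj C ([Inl g] @ [Inr (i, g <# P i), Inl (g \<otimes> p), Inr (i, g <# P i)] @ [Inl g]) ([Inl g] @ [Inr (i, g <# P i)] @ [Inl g])"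
    by (rule edge_htpy_bt[of adj, OF ad(2)])
  then have "edge_htpy adj C (F g [a, fp_letter_inv G a]) ([Inl g] @ [Inr (i, g <# P i)] @ [Inl g])"
    using e by metis
  moreover have "edge_htpy adj C ([] @ [Inl g, Inr (i, g <# P i), Inl g] @ []) ([] @ [Inl g] @ [])"
    using edge_htpy_bt[of adj, OF ad(1)] by blast
  ultimately show ?thesis using edge_htpy_trans by fastforce
qed

lemma F_cancel:
  "fp_word S I P x \<Longrightarrow> g \<in> carrier G \<Longrightarrow> edge_htpy adj C (F g (x @ fp_word_inv G x)) [Inl g]"
proof (induction x arbitrary: g)
  case Nil then show ?case by simp
next
  case (Cons a x)
  have wa: "fp_word S I P [a]" "fp_word S I P x" using Cons.prems(1) fp_word_Cons[where x=a and w=x] by simp_all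
  have ca: "cw [a]" "cw x" using fp_word_cw[OF wa(1) S_car] fp_word_cw[OF wa(2) S_car] by simp_all
  have ga: "g \<otimes> fp_eval G [a] \<in> carrier G" using ca Cons.prems by simp
  have ee: "fp_eval G (x @ fp_word_inv G x) = fp_eval G []" using ca by (simp add: eval_append eval_winv)
  have 1: "edge_htpy adj C (F g ([a] @ (x @ fp_word_inv G x) @ [fp_letter_inv G a])) (F g ([a] @ [] @ [fp_letter_inv G a]))"
  proof (rule F_cong[OF Cons.prems(2) ca(1), where a="x @ fp_word_inv G x" and b="[]"])
    show "cw (x @ fp_word_inv G x)" using ca by simp
    show "cw []" by simp
    show "fp_eval G (x @ fp_word_inv G x) = fp_eval G []" by (rule ee)
    show "edge_htpy adj C (F (g \<otimes> fp_eval G [a]) (x @ fp_word_inv G x)) (F (g \<otimes> fp_eval G [a]) [])"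
      using Cons.IH[OF wa(2) ga] by (simp only: F.simps(1))
  qed
  have 2: "edge_htpy adj C (F g ([a] @ [] @ [fp_letter_inv G a])) [Inl g]"
    using F_pair_trivial[OF wa(1) Cons.prems(2)] by (simp only: append_Cons append_Nil)
  have 3: "(a # x) @ fp_word_inv G (a # x) = [a] @ (x @ fp_word_inv G x) @ [fp_letter_inv G a]" by simp
  show ?case unfolding 3 by (rule edge_htpy_trans[OF 1 2])
qed

lemma hd_butlast': "butlast xs \<noteq> [] \<Longrightarrow> hd (butlast xs) = hd xs"
  by (induction xs) auto

lemma F_cell_swap:
  assumes x: "fp_word S I P x" and y: "fp_word S I P y" and g: "g \<in> carrier G"
    and e: "fp_eval G x = fp_eval G y"
    and cell: "fp_word_inv G x @ y \<noteq> [] \<Longrightarrow> butlast (F (g \<otimes> fp_eval G x) (fp_word_inv G x @ y)) \<in> C"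
  shows "edge_htpy adj C (F g x) (F g y)"
proof (cases "fp_word_inv G x @ y = []")
  case True then show ?thesis by (simp add: fp_word_inv_def)
next
  case False
  have cx: "cw x" "cw y" using x y fp_word_cw S_car by blast+
  define h where "h = g \<otimes> fp_eval G x"
  have hc: "h \<in> carrier G" using h_def g cx by simp
  define c where "c = butlast (F h (fp_word_inv G x @ y))"
  have lastz: "last (F h (fp_word_inv G x @ y)) = Inl h"
    using last_F[OF hc, of "fp_word_inv G x @ y"] cx e hc by (simp add: eval_append eval_winv)
  have "0 < length (fp_word_inv G x @ y)" using False by simp
  then have len: "length (F h (fp_word_inv G x @ y)) \<ge> 2" using F_length[of h "fp_word_inv G x @ y"] by linarith
  have cne: "c \<noteq> []" using len c_def by (cases "F h (fp_word_inv G x @ y)") auto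
  have hdc: "hd c = Inl h" using cne c_def hd_F by (metis hd_butlast')
  have cc: "c @ [hd c] = F h (fp_word_inv G x @ y)"
    using hdc lastz c_def append_butlast_last_id[OF F_ne] by metis
  have Fx: "F g x = butlast (F g x) @ [Inl h] @ []"
    using append_butlast_last_id[OF F_ne, of g x] last_F[OF g cx(1)] h_def by simp
  have "edge_htpy adj C (F g x) (butlast (F g x) @ c @ [hd c] @ [])"
    using edge_htpy_cell[of c C adj "butlast (F g x)" "[]"] Fx hdc cell False c_def h_def cne by simp
  also have "butlast (F g x) @ c @ [hd c] @ [] = F g (x @ fp_word_inv G x @ y)"
    using cc F_append[OF g cx(1)] h_def by simp
  finally have 1: "edge_htpy adj C (F g x) (F g ([] @ (x @ fp_word_inv G x) @ y))" by simp
  have "edge_htpy adj C (F g ([] @ (x @ fp_word_inv G x) @ y)) (F g ([] @ [] @ y))"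
    using F_cong[of g "[]" "x @ fp_word_inv G x" "[]" C y] g cx F_cancel[OF x g]
    by (simp add: eval_append eval_winv)
  then show ?thesis using 1 edge_htpy_trans by fastforce
qed

lemma card_Inr_le: "card {v \<in> set c. \<exists>c'. v = Inr c'} \<le> length (filter (\<lambda>v. \<not> isl v) c)"
proof -
  have e: "(\<exists>c'. v = Inr c') \<longleftrightarrow> \<not> isl v" for v :: "'x + 'y" by (cases v) auto
  have "{v \<in> set c. \<exists>c'. v = Inr c'} = set (filter (\<lambda>v. \<not> isl v) c)"
    unfolding e by auto
  then show ?thesis by (metis card_length)
qed

lemma filter_butlast_le: "length (filter Q (butlast xs)) \<le> length (filter Q xs)"
  by (induction xs) auto

lemma F_cell:
  assumes "fp_word S I P z" "z \<noteq> []" "g \<in> carrier G" "fp_eval G z = \<one>"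
    and "length (filter (\<lambda>x. \<not> isl x) z) \<le> 1" "length z + length (filter (\<lambda>x. \<not> isl x) z) < l"
  shows "butlast (F g z) \<in> unicone_cells G I P S l"
proof -
  have cz: "cw z" using assms(1) fp_word_cw S_car by blast
  define c where "c = butlast (F g z)"
  have lastz: "last (F g z) = Inl g" using last_F[OF assms(3) cz] assms(3,4) by simp
  have "0 < length z" using assms(2) by simp
  then have len: "length (F g z) \<ge> 2" using F_length[of g z] by linarith
  have cne: "c \<noteq> []" using len c_def by (cases "F g z") auto
  have hdc: "hd c = Inl g" using cne c_def hd_F by (metis hd_butlast')
  have cc: "c @ [hd c] = F g z"
    using hdc lastz c_def append_butlast_last_id[OF F_ne] by metis
  have "edge_loop adj c" unfolding edge_loop_succ using cne cc F_path[OF assms(1,3)] by simp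
  moreover have "unicone c" unfolding unicone_def
    using card_Inr_le[of c] filter_butlast_le[of "\<lambda>v. \<not> isl v" "F g z"] F_count[of g z] assms(5) c_def
    by (simp only:)
  moreover have "length c < l" using c_def F_length[of g z] assms(6) by simp
  ultimately show ?thesis unfolding unicone_cells_def c_def by simp
qed

lemma F_congL:
  assumes g: "g \<in> carrier G" and c: "cw x" "cw a" "cw b" and e: "fp_eval G a = fp_eval G b"
    and h: "edge_htpy adj C (F (g \<otimes> fp_eval G x) a) (F (g \<otimes> fp_eval G x) b)"
  shows "edge_htpy adj C (F g (x @ a)) (F g (x @ b))"
  using F_cong[OF assms, of "[]"] by (simp only: append_Nil2)

lemma F_congR:
  assumes g: "g \<in> carrier G" and c: "cw a" "cw b" and e: "fp_eval G a = fp_eval G b"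
    and h: "edge_htpy adj C (F g a) (F g b)"
  shows "edge_htpy adj C (F g (a @ y)) (F g (b @ y))"
proof -
  have e1: "g \<otimes> fp_eval G [] = g" using g by simp
  have "edge_htpy adj C (F g ([] @ a @ y)) (F g ([] @ b @ y))"
    by (rule F_cong[OF g _ c e]) (simp_all only: e1 h cw_simps(1))
  then show ?thesis by (simp only: append_Nil)
qed

lemma F_merge:
  assumes "i \<in> I" "p \<in> P i" "q \<in> P i" "h \<in> carrier G"
  shows "edge_htpy adj C (F h [Inr (i, p), Inr (i, q)]) (F h [Inr (i, p \<otimes> q)])"
proof -
  have pc: "p \<in> carrier G" "q \<in> carrier G" using assms P_car by auto
  have "successively adj (F h [Inr (i, p)])" using F_path[of "[Inr (i, p)]" h] assms by simp
  then have ad: "adj (Inr (i, h <# P i)) (Inl (h \<otimes> p))" by (simp add: successively_Cons)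
  have e1: "F h [Inr (i, p), Inr (i, q)] = [Inl h] @ [Inr (i, h <# P i), Inl (h \<otimes> p), Inr (i, h <# P i)] @ [Inl (h \<otimes> p \<otimes> q)]"
    using assms pc by (simp add: coset_mult)
  have e2: "F h [Inr (i, p \<otimes> q)] = [Inl h] @ [Inr (i, h <# P i)] @ [Inl (h \<otimes> p \<otimes> q)]"
    using assms pc by (simp add: m_assoc)
  show ?thesis unfolding e1 e2 by (rule edge_htpy_bt[of adj, OF ad])
qed

lemma F_unit:
  assumes "i \<in> I" "h \<in> carrier G"
  shows "edge_htpy adj C (F h [Inr (i, \<one>)]) (F h [])"
proof -
  have "successively adj (F h [Inr (i, \<one>)])" using F_path[of "[Inr (i, \<one>)]" h] assms subgroup.one_closed[OF subg] by simp
  then have ad: "adj (Inl h) (Inr (i, h <# P i))" by (simp add: successively_Cons)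
  have e1: "F h [Inr (i, \<one>)] = [] @ [Inl h, Inr (i, h <# P i), Inl h] @ []"
    using assms by simp
  have e2: "F h [] = [] @ [Inl h] @ []" by simp
  show ?thesis unfolding e1 e2 by (rule edge_htpy_bt[of adj, OF ad])
qed

end


locale cpair2 = cpair G I P S for G :: "('a, 'b) monoid_scheme" (structure) and I :: "'i set" and P S +
  assumes finS: "finite S" and gen: "generate G S = carrier G"
begin

definition sw :: "('a, 'i) fp_letter list \<Rightarrow> bool" where
  "sw w \<longleftrightarrow> fp_word S I P w \<and> (\<forall>x \<in> set w. isl x)"

lemma sw_simps[simp]: "sw []" "sw (u @ w) \<longleftrightarrow> sw u \<and> sw w"
  by (auto simp: sw_def)

lemma sw_winv: "sw w \<Longrightarrow> sw (fp_word_inv G w)"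
proof (induction w)
  case (Cons x w) then show ?case by (cases x rule: lcar.cases) (auto simp: sw_def)
qed simp

lemma gen_word: "g \<in> generate G S \<Longrightarrow> \<exists>w. sw w \<and> fp_eval G w = g"
proof (induction rule: generate.induct)
  case one then show ?case by (intro exI[of _ "[]"]) simp
next
  case (incl h)
  then have "h \<in> carrier G" using S_car by auto
  then show ?case using incl by (intro exI[of _ "[Inl (h, True)]"]) (simp add: sw_def)
next
  case (inv h)
  then have "h \<in> carrier G" using S_car by auto
  then show ?case using inv by (intro exI[of _ "[Inl (h, False)]"]) (simp add: sw_def)
next
  case (eng h1 h2)
  then obtain w1 w2 where "sw w1" "fp_eval G w1 = h1" "sw w2" "fp_eval G w2 = h2" by blast
  moreover have "cw w1" "cw w2" using calculation fp_word_cw[OF _ S_car] by (auto simp: sw_def)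
  ultimately show ?case by (intro exI[of _ "w1 @ w2"]) (simp add: eval_append)
qed

definition sig :: "'a \<Rightarrow> ('a, 'i) fp_letter list" where
  "sig g = (SOME w. sw w \<and> fp_eval G w = g)"

lemma sig: "g \<in> carrier G \<Longrightarrow> sw (sig g) \<and> fp_eval G (sig g) = g"
  unfolding sig_def using gen_word[of g] gen by (metis (mono_tags, lifting) someI_ex)

lemma sw_word: "sw w \<Longrightarrow> fp_word S I P w" by (simp add: sw_def)
lemma sw_cw: "sw w \<Longrightarrow> cw w" using fp_word_cw[OF _ S_car] by (simp add: sw_def)
lemma sw_count: "sw w \<Longrightarrow> length (filter (\<lambda>x. \<not> isl x) w) = 0" by (simp add: sw_def)


lemma F_loop:
  assumes "sw z" "fp_eval G z = \<one>" "length z < l" "g \<in> carrier G"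
  shows "edge_htpy adj (Cl l) (F g z) [Inl g]"
proof (cases "z = []")
  case True then show ?thesis by simp
next
  case False
  define c where "c = butlast (F g z)"
  have cin: "c \<in> Cl l" unfolding c_def
    by (rule F_cell) (use assms False sw_count[OF assms(1)] sw_word in auto)
  have lastz: "last (F g z) = Inl g" using last_F[OF assms(4) sw_cw[OF assms(1)]] assms by simp
  have "0 < length z" using False by simp
  then have len: "length (F g z) \<ge> 2" using F_length[of g z] by linarith
  have cne: "c \<noteq> []" using len c_def by (cases "F g z") auto
  have hdc: "hd c = Inl g" using cne c_def hd_F by (metis hd_butlast')
  have cc: "c @ [hd c] = F g z"
    using hdc lastz c_def append_butlast_last_id[OF F_ne] by metis
  have "edge_htpy adj (Cl l) ([] @ [hd c] @ []) ([] @ c @ [hd c] @ [])"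
    by (rule edge_htpy_cell[OF cin cne])
  then have "edge_htpy adj (Cl l) [Inl g] (F g z)" using cc hdc by simp
  then show ?thesis by (rule edge_htpy_sym)
qed

end

locale fwd = cpair2 G I P S for G :: "('a, 'b) monoid_scheme" (structure) and I :: "'i set" and P S +
  fixes S' :: "'a set" and R :: "('a, 'i) fp_letter list set"
  assumes finS': "finite S'" and S'_car: "S' \<subseteq> carrier G"
    and surj: "\<And>g. g \<in> carrier G \<Longrightarrow> \<exists>w. fp_word S' I P w \<and> fp_eval G w = g"
    and finR: "finite R" and R_word: "\<And>r. r \<in> R \<Longrightarrow> fp_word S' I P r"
    and kernel: "\<And>w. fp_word S' I P w \<Longrightarrow> (fp_eval G w = \<one> \<longleftrightarrow> w \<in> fp_normal_closure G S' I P R)"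
begin

definition tau :: "'a \<Rightarrow> ('a, 'i) fp_letter list" where
  "tau g = (SOME w. fp_word S' I P w \<and> fp_eval G w = g)"

lemma tau: "g \<in> carrier G \<Longrightarrow> fp_word S' I P (tau g) \<and> fp_eval G (tau g) = g"
  unfolding tau_def using surj[of g] by (metis (mono_tags, lifting) someI_ex)

fun sl :: "('a, 'i) fp_letter \<Rightarrow> ('a, 'i) fp_letter list" where
  "sl (Inl (s, b)) = (if b then sig s else fp_word_inv G (sig s))"
| "sl (Inr x) = [Inr x]"

fun Tl :: "('a, 'i) fp_letter \<Rightarrow> ('a, 'i) fp_letter list" where
  "Tl (Inl (s, b)) = (if b then tau s else fp_word_inv G (tau s))"
| "Tl (Inr x) = [Inr x]"

fun rl :: "('a, 'i) fp_letter \<Rightarrow> ('a, 'i) fp_letter list" where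
  "rl (Inl x) = [Inl x]"
| "rl (Inr (i, p)) = sig p"

definition "subst w = concat (map sl w)"
definition "Tw w = concat (map Tl w)"
definition "rho w = concat (map rl w)"

lemma subst_simps[simp]: "subst [] = []" "subst (x # w) = sl x @ subst w" "subst (u @ w) = subst u @ subst w"
  by (auto simp: subst_def)
lemma Tw_simps[simp]: "Tw [] = []" "Tw (x # w) = Tl x @ Tw w" "Tw (u @ w) = Tw u @ Tw w"
  by (auto simp: Tw_def)
lemma rho_simps[simp]: "rho [] = []" "rho (x # w) = rl x @ rho w" "rho (u @ w) = rho u @ rho w"
  by (auto simp: rho_def)

lemma S'_word_cw: "fp_word S' I P w \<Longrightarrow> cw w" using fp_word_cw[OF _ S'_car] .
lemma S_word_cw: "fp_word S I P w \<Longrightarrow> cw w" using fp_word_cw[OF _ S_car] .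

lemma sl_props: "fp_word S' I P [x] \<Longrightarrow> fp_word S I P (sl x) \<and> fp_eval G (sl x) = fp_letter_val G x"
proof (cases x rule: lcar.cases)
  case (1 s b)
  assume w: "fp_word S' I P [x]"
  then have s: "s \<in> carrier G" using 1 S'_car by auto
  have "sw (sig s)" "fp_eval G (sig s) = s" using sig[OF s] by auto
  then show ?thesis using 1 s sw_winv[of "sig s"] sw_cw[of "sig s"] by (auto simp: sw_def eval_winv)
next
  case (2 i p)
  assume w: "fp_word S' I P [x]"
  then show ?thesis using 2 P_car by auto
qed

lemma subst_props: "fp_word S' I P w \<Longrightarrow> fp_word S I P (subst w) \<and> fp_eval G (subst w) = fp_eval G w"
proof (induction w)
  case (Cons x w)
  have wx: "fp_word S' I P [x]" "fp_word S' I P w" using Cons.prems fp_word_Cons[where x=x and w=w] by simp_all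
  have "cw (sl x)" "cw (subst w)" using sl_props[OF wx(1)] Cons.IH[OF wx(2)] S_word_cw by auto
  then show ?case using sl_props[OF wx(1)] Cons.IH[OF wx(2)] by (simp add: eval_append)
qed simp

lemma Tl_props: "fp_word S I P [x] \<Longrightarrow> fp_word S' I P (Tl x) \<and> fp_eval G (Tl x) = fp_letter_val G x"
proof (cases x rule: lcar.cases)
  case (1 s b)
  assume w: "fp_word S I P [x]"
  then have s: "s \<in> carrier G" using 1 S_car by auto
  have "fp_word S' I P (tau s)" "fp_eval G (tau s) = s" using tau[OF s] by auto
  then show ?thesis using 1 s fp_word_winv[of S' "tau s"] S'_word_cw[of "tau s"] by (auto simp: eval_winv)
next
  case (2 i p)
  assume w: "fp_word S I P [x]"
  then show ?thesis using 2 P_car by auto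
qed

lemma Tw_props: "fp_word S I P w \<Longrightarrow> fp_word S' I P (Tw w) \<and> fp_eval G (Tw w) = fp_eval G w"
proof (induction w)
  case (Cons x w)
  have wx: "fp_word S I P [x]" "fp_word S I P w" using Cons.prems fp_word_Cons[where x=x and w=w] by simp_all
  have "cw (Tl x)" "cw (Tw w)" using Tl_props[OF wx(1)] Cons.IH[OF wx(2)] S'_word_cw by auto
  then show ?case using Tl_props[OF wx(1)] Cons.IH[OF wx(2)] by (simp add: eval_append)
qed simp

lemma rl_props: "fp_word S I P [x] \<Longrightarrow> sw (rl x) \<and> fp_eval G (rl x) = fp_letter_val G x"
proof (cases x rule: lcar.cases)
  case (1 s b)
  assume w: "fp_word S I P [x]"
  then show ?thesis using 1 S_car by (auto simp: sw_def)
next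
  case (2 i p)
  assume w: "fp_word S I P [x]"
  then have "p \<in> carrier G" using 2 P_car by auto
  then show ?thesis using 2 sig by auto
qed

lemma rho_props: "fp_word S I P w \<Longrightarrow> sw (rho w) \<and> fp_eval G (rho w) = fp_eval G w"
proof (induction w)
  case (Cons x w)
  have wx: "fp_word S I P [x]" "fp_word S I P w" using Cons.prems fp_word_Cons[where x=x and w=w] by simp_all
  have "cw (rl x)" "cw (rho w)" using rl_props[OF wx(1)] Cons.IH[OF wx(2)] sw_cw by auto
  then show ?case using rl_props[OF wx(1)] Cons.IH[OF wx(2)] by (simp add: eval_append)
qed simp

lemma subst_winv: "fp_word S' I P w \<Longrightarrow> subst (fp_word_inv G w) = fp_word_inv G (subst w)"
proof (induction w)
  case (Cons x w)
  have wx: "fp_word S' I P [x]" "fp_word S' I P w" using Cons.prems fp_word_Cons[where x=x and w=w] by simp_all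
  have "sl (fp_letter_inv G x) = fp_word_inv G (sl x)"
  proof (cases x rule: lcar.cases)
    case (1 s b)
    then have s: "s \<in> carrier G" using wx S'_car by auto
    then have "cw (sig s)" using sig sw_cw by blast
    then show ?thesis using 1 by simp
  next
    case (2 i p) then show ?thesis by simp
  qed
  then show ?case using Cons.IH[OF wx(2)] by simp
qed simp

definition "Wset = subst ` R \<union> (\<lambda>r. subst (fp_word_inv G r)) ` R \<union> (\<lambda>sb. subst (Tw [Inl sb])) ` (S \<times> UNIV)"
definition "Fin = (\<Union>w \<in> Wset. set w)"
definition "L1 = Max (insert 0 ((\<lambda>w. length (rho w)) ` Wset))"
definition "L2 = Max (insert 0 ((\<lambda>x. length (rl x)) ` Fin))"
definition "l0 = L1 + L2 + 3"

lemma fin_Wset: "finite Wset" unfolding Wset_def using finR finS by auto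
lemma fin_Fin: "finite Fin" unfolding Fin_def using fin_Wset by auto

lemma L1: "w \<in> Wset \<Longrightarrow> length (rho w) \<le> L1"
  unfolding L1_def using fin_Wset by (intro Max_ge) auto
lemma L2: "x \<in> Fin \<Longrightarrow> length (rl x) \<le> L2"
  unfolding L2_def using fin_Fin by (intro Max_ge) auto

lemma Wset_word: "w \<in> Wset \<Longrightarrow> fp_word S I P w"
proof -
  assume "w \<in> Wset"
  then consider (a) r where "r \<in> R" "w = subst r" | (b) r where "r \<in> R" "w = subst (fp_word_inv G r)"
    | (c) s b where "s \<in> S" "w = subst (Tw [Inl (s, b)])"
    unfolding Wset_def by blast
  then show ?thesis
  proof cases
    case a then show ?thesis using subst_props R_word by blast
  next
    case b then show ?thesis using subst_props R_word fp_word_winv by blast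
  next
    case c
    then have "fp_word S I P [Inl (s, b)]" by simp
    then show ?thesis using c subst_props Tw_props by blast
  qed
qed

lemma Fin_word: "x \<in> Fin \<Longrightarrow> fp_word S I P [x]"
  unfolding Fin_def using Wset_word by (auto simp: fp_word_def)

lemma rl_htpy:
  assumes "x \<in> Fin" "h \<in> carrier G"
  shows "edge_htpy adj (Cl l0) (F h [x]) (F h (rl x))"
proof (cases x rule: lcar.cases)
  case (1 s b) then show ?thesis by simp
next
  case (2 i p)
  have w: "fp_word S I P [x]" using Fin_word assms(1) by blast
  then have ip: "i \<in> I" "p \<in> P i" "p \<in> carrier G" using 2 P_car by auto
  have sg: "sw (sig p)" "fp_eval G (sig p) = p" using sig[OF ip(3)] by auto
  have len: "length (sig p) \<le> L2" using L2[OF assms(1)] 2 by simp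
  show ?thesis unfolding 2 rl.simps
  proof (rule F_cell_swap)
    show "fp_word S I P [Inr (i, p)]" using w 2 by simp
    show "fp_word S I P (sig p)" using sg sw_word by blast
    show "h \<in> carrier G" by fact
    show "fp_eval G [Inr (i, p)] = fp_eval G (sig p)" using sg ip by simp
    show "butlast (F (h \<otimes> fp_eval G [Inr (i, p)]) (fp_word_inv G [Inr (i, p)] @ sig p)) \<in> Cl l0"
    proof (rule F_cell)
      show "fp_word S I P (fp_word_inv G [Inr (i, p)] @ sig p)"
        using ip sg sw_word by (simp add: fp_word_inv_def subgroup.m_inv_closed[OF subg])
      show "fp_word_inv G [Inr (i, p)] @ sig p \<noteq> []" by (simp add: fp_word_inv_def)
      show "h \<otimes> fp_eval G [Inr (i, p)] \<in> carrier G" using ip assms by simp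
      show "fp_eval G (fp_word_inv G [Inr (i, p)] @ sig p) = \<one>"
        using ip sg sw_cw[OF sg(1)] by (simp add: fp_word_inv_def eval_append)
      show "length (filter (\<lambda>x. \<not> isl x) (fp_word_inv G [Inr (i, p)] @ sig p)) \<le> 1"
        using sw_count[OF sg(1)] by (simp add: fp_word_inv_def)
      show "length (fp_word_inv G [Inr (i, p)] @ sig p) + length (filter (\<lambda>x. \<not> isl x) (fp_word_inv G [Inr (i, p)] @ sig p)) < l0"
        using sw_count[OF sg(1)] len by (simp add: fp_word_inv_def l0_def)
    qed
  qed
qed

lemma rho_htpy:
  "fp_word S I P w \<Longrightarrow> set w \<subseteq> Fin \<Longrightarrow> g \<in> carrier G \<Longrightarrow> edge_htpy adj (Cl l0) (F g w) (F g (rho w))"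
proof (induction w arbitrary: g)
  case Nil then show ?case by simp
next
  case (Cons x w)
  have wx: "fp_word S I P [x]" "fp_word S I P w" using Cons.prems fp_word_Cons[where x=x and w=w] by simp_all
  have rx: "sw (rl x)" "fp_eval G (rl x) = fp_letter_val G x" using rl_props[OF wx(1)] by auto
  have rw: "sw (rho w)" "fp_eval G (rho w) = fp_eval G w" using rho_props[OF wx(2)] by auto
  have cx: "cw [x]" "cw w" "cw (rl x)" "cw (rho w)" using S_word_cw[OF wx(1)] S_word_cw[OF wx(2)] sw_cw[OF rx(1)] sw_cw[OF rw(1)] by auto
  have 1: "edge_htpy adj (Cl l0) (F g ([x] @ w)) (F g (rl x @ w))"
    by (rule F_congR) (use Cons.prems cx rx rl_htpy in auto)
  have gx: "g \<otimes> fp_eval G (rl x) \<in> carrier G" using cx Cons.prems by simp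
  have 2: "edge_htpy adj (Cl l0) (F g (rl x @ w)) (F g (rl x @ rho w))"
    by (rule F_congL) (use Cons.prems cx rw Cons.IH[OF wx(2) _ gx] in auto)
  show ?case using edge_htpy_trans[OF 1 2] by simp
qed

lemma Wset_loop:
  assumes "w \<in> Wset" "fp_eval G w = \<one>" "g \<in> carrier G"
  shows "edge_htpy adj (Cl l0) (F g w) [Inl g]"
proof -
  have w: "fp_word S I P w" using Wset_word assms(1) by blast
  have 1: "edge_htpy adj (Cl l0) (F g w) (F g (rho w))"
    by (rule rho_htpy[OF w _ assms(3)]) (use assms(1) in \<open>auto simp: Fin_def\<close>)
  have "edge_htpy adj (Cl l0) (F g (rho w)) [Inl g]"
    by (rule F_loop) (use rho_props[OF w] assms L1[OF assms(1)] in \<open>auto simp: l0_def\<close>)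
  then show ?thesis using edge_htpy_trans[OF 1] by blast
qed

lemma step_htpy:
  assumes "fp_step G u v" "fp_word S' I P u" "fp_word S' I P v" "g \<in> carrier G"
  shows "edge_htpy adj (Cl l0) (F g (subst u)) (F g (subst v))"
  using assms(1)
proof cases
  case (cancel x s b y)
  have ws: "fp_word S' I P x" "s \<in> S'" "fp_word S' I P y" using assms(2) cancel by auto
  have sc: "s \<in> carrier G" using ws S'_car by auto
  define q where "q = sl (Inl (s, b))"
  have q: "fp_word S I P q" using sl_props[of "Inl (s, b)"] ws q_def by simp
  have cq: "cw (sig s)" using sig[OF sc] sw_cw by blast
  have e: "subst u = subst x @ (q @ fp_word_inv G q) @ subst y" using cancel q_def cq by (cases b) auto
  have sx: "fp_word S I P (subst x)" "fp_word S I P (subst y)" using subst_props ws by blast+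
  have cx: "cw (subst x)" "cw (subst y)" "cw q" using sx q S_word_cw by blast+
  have h: "g \<otimes> fp_eval G (subst x) \<in> carrier G" using cx assms(4) by simp
  have hh: "edge_htpy adj (Cl l0) (F g (subst x @ (q @ fp_word_inv G q) @ subst y)) (F g (subst x @ [] @ subst y))"
    by (rule F_cong) (use assms(4) cx F_cancel[OF q h] in \<open>auto simp: eval_append eval_winv\<close>)
  have ev: "subst v = subst x @ [] @ subst y" using cancel by simp
  show ?thesis unfolding e ev by (rule hh)
next
  case (merge x i p q y)
  have ws: "fp_word S' I P x" "i \<in> I" "p \<in> P i" "q \<in> P i" "fp_word S' I P y" using assms(2) merge by auto
  have pc: "p \<in> carrier G" "q \<in> carrier G" using ws P_car by auto
  have sx: "fp_word S I P (subst x)" "fp_word S I P (subst y)" using subst_props ws by blast+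
  have cx: "cw (subst x)" "cw (subst y)" using sx S_word_cw by blast+
  have h: "g \<otimes> fp_eval G (subst x) \<in> carrier G" using cx assms(4) by simp
  have "edge_htpy adj (Cl l0) (F g (subst x @ [Inr (i, p), Inr (i, q)] @ subst y)) (F g (subst x @ [Inr (i, p \<otimes> q)] @ subst y))"
    by (rule F_cong) (use assms(4) cx pc F_merge[OF ws(2-4) h] in \<open>auto simp: m_assoc\<close>)
  moreover have "subst u = subst x @ [Inr (i, p), Inr (i, q)] @ subst y" "subst v = subst x @ [Inr (i, p \<otimes> q)] @ subst y"
    using merge by simp_all
  ultimately show ?thesis by simp
next
  case (unit x i y)
  have ws: "fp_word S' I P x" "i \<in> I" "fp_word S' I P y" using assms(2) unit by auto
  have sx: "fp_word S I P (subst x)" "fp_word S I P (subst y)" using subst_props ws by blast+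
  have cx: "cw (subst x)" "cw (subst y)" using sx S_word_cw by blast+
  have h: "g \<otimes> fp_eval G (subst x) \<in> carrier G" using cx assms(4) by simp
  have "edge_htpy adj (Cl l0) (F g (subst x @ [Inr (i, \<one>)] @ subst y)) (F g (subst x @ [] @ subst y))"
    by (rule F_cong) (use assms(4) cx F_unit[OF ws(2) h] in \<open>auto\<close>)
  moreover have "subst u = subst x @ [Inr (i, \<one>)] @ subst y" "subst v = subst x @ [] @ subst y"
    using unit by simp_all
  ultimately show ?thesis by (simp only:)
qed

lemma equiv_htpy:
  assumes "fp_equiv G S' I P w w'" "fp_word S' I P w" "g \<in> carrier G"
  shows "fp_word S' I P w' \<and> edge_htpy adj (Cl l0) (F g (subst w)) (F g (subst w'))"
proof -
  let ?r = "\<lambda>u v. fp_word S' I P u \<and> fp_word S' I P v \<and> fp_step G u v"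
  have ch: "(symclp ?r)\<^sup>*\<^sup>* w w'" using assms(1) unfolding fp_equiv_def .
  have "(symclp (htpy_step adj (Cl l0)))\<^sup>*\<^sup>* ((\<lambda>w. F g (subst w)) w) ((\<lambda>w. F g (subst w)) w')"
  proof (rule rtranclp_symclp_lift[OF _ ch])
    fix x y assume "?r x y"
    then show "(symclp (htpy_step adj (Cl l0)))\<^sup>*\<^sup>* (F g (subst x)) (F g (subst y))"
      using step_htpy assms(3) unfolding edge_htpy_def by blast
  qed
  moreover have "fp_word S' I P w'" using ch assms(2)
    by (induction rule: rtranclp_induct) (auto elim: symclpE)
  ultimately show ?thesis unfolding edge_htpy_def by simp
qed

lemma R_eval: "r \<in> R \<Longrightarrow> fp_eval G r = \<one>"
proof -
  assume r: "r \<in> R"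
  have "[] @ r @ fp_word_inv G [] @ [] \<in> fp_normal_closure G S' I P R"
    by (rule fp_normal_closure.conj[OF fp_normal_closure.empty r]) simp
  then show ?thesis using kernel[OF R_word[OF r]] by simp
qed

lemma NC_htpy:
  "w \<in> fp_normal_closure G S' I P R \<Longrightarrow> fp_word S' I P w \<and> (\<forall>g \<in> carrier G. edge_htpy adj (Cl l0) (F g (subst w)) [Inl g])"
proof (induction rule: fp_normal_closure.induct)
  case empty then show ?case by simp
next
  case (conj w r u)
  have wr: "fp_word S' I P r" using R_word conj by blast
  have ws: "fp_word S I P (subst u)" "fp_word S I P (subst r)" "fp_word S I P (subst w)"
    using subst_props wr conj by blast+
  have cs: "cw (subst u)" "cw (subst r)" "cw (subst w)" using ws S_word_cw by blast+
  have er: "fp_eval G (subst r) = \<one>" using subst_props[OF wr] R_eval conj by simp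
  have rW: "subst r \<in> Wset" using conj unfolding Wset_def by blast
  have "\<forall>g \<in> carrier G. edge_htpy adj (Cl l0) (F g (subst (u @ r @ fp_word_inv G u @ w))) [Inl g]"
  proof
    fix g assume g: "g \<in> carrier G"
    have h: "g \<otimes> fp_eval G (subst u) \<in> carrier G" using g cs by simp
    have e: "subst (u @ r @ fp_word_inv G u @ w) = subst u @ subst r @ (fp_word_inv G (subst u) @ subst w)"
      using subst_winv conj by simp
    have 1: "edge_htpy adj (Cl l0) (F g (subst u @ subst r @ (fp_word_inv G (subst u) @ subst w)))
                (F g (subst u @ [] @ (fp_word_inv G (subst u) @ subst w)))"
      by (rule F_cong) (use g cs er Wset_loop[OF rW er h] in auto)
    have 2: "edge_htpy adj (Cl l0) (F g ([] @ (subst u @ fp_word_inv G (subst u)) @ subst w)) (F g ([] @ [] @ subst w))"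
      by (rule F_cong) (use g cs F_cancel[OF ws(1) g] in \<open>auto simp: eval_append eval_winv\<close>)
    have 3: "edge_htpy adj (Cl l0) (F g (subst w)) [Inl g]" using conj g by blast
    show "edge_htpy adj (Cl l0) (F g (subst (u @ r @ fp_word_inv G u @ w))) [Inl g]"
      unfolding e using edge_htpy_trans[OF 1 edge_htpy_trans[OF _ 3]] 2 by simp
  qed
  then show ?case using conj wr fp_word_winv by simp
next
  case (conj_inv w r u)
  have wr0: "fp_word S' I P r" using R_word conj_inv by blast
  then have wr: "fp_word S' I P (fp_word_inv G r)" using fp_word_winv by blast
  have ws: "fp_word S I P (subst u)" "fp_word S I P (subst (fp_word_inv G r))" "fp_word S I P (subst w)"
    using subst_props wr conj_inv by blast+
  have cs: "cw (subst u)" "cw (subst (fp_word_inv G r))" "cw (subst w)" using ws S_word_cw by blast+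
  have er: "fp_eval G (subst (fp_word_inv G r)) = \<one>"
    using subst_props[OF wr] R_eval conj_inv eval_winv S'_word_cw[OF wr0] by simp
  have rW: "subst (fp_word_inv G r) \<in> Wset" using conj_inv unfolding Wset_def by blast
  have "\<forall>g \<in> carrier G. edge_htpy adj (Cl l0) (F g (subst (u @ fp_word_inv G r @ fp_word_inv G u @ w))) [Inl g]"
  proof
    fix g assume g: "g \<in> carrier G"
    have h: "g \<otimes> fp_eval G (subst u) \<in> carrier G" using g cs by simp
    have e: "subst (u @ fp_word_inv G r @ fp_word_inv G u @ w) = subst u @ subst (fp_word_inv G r) @ (fp_word_inv G (subst u) @ subst w)"
      using subst_winv conj_inv by simp
    have 1: "edge_htpy adj (Cl l0) (F g (subst u @ subst (fp_word_inv G r) @ (fp_word_inv G (subst u) @ subst w)))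
                (F g (subst u @ [] @ (fp_word_inv G (subst u) @ subst w)))"
      by (rule F_cong) (use g cs er Wset_loop[OF rW er h] in auto)
    have 2: "edge_htpy adj (Cl l0) (F g ([] @ (subst u @ fp_word_inv G (subst u)) @ subst w)) (F g ([] @ [] @ subst w))"
      by (rule F_cong) (use g cs F_cancel[OF ws(1) g] in \<open>auto simp: eval_append eval_winv\<close>)
    have 3: "edge_htpy adj (Cl l0) (F g (subst w)) [Inl g]" using conj_inv g by blast
    show "edge_htpy adj (Cl l0) (F g (subst (u @ fp_word_inv G r @ fp_word_inv G u @ w))) [Inl g]"
      unfolding e using edge_htpy_trans[OF 1 edge_htpy_trans[OF _ 3]] 2 by simp
  qed
  then show ?case using conj_inv wr fp_word_winv by simp
next
  case (equiv w w')
  have ww: "fp_word S' I P w" using equiv(3) by blast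
  have w': "fp_word S' I P w'" using equiv_htpy[OF equiv(2) ww one_closed] by blast
  have "edge_htpy adj (Cl l0) (F g (subst w')) [Inl g]" if g: "g \<in> carrier G" for g
  proof -
    have "edge_htpy adj (Cl l0) (F g (subst w)) (F g (subst w'))" using equiv_htpy[OF equiv(2) ww g] by blast
    moreover have "edge_htpy adj (Cl l0) (F g (subst w)) [Inl g]" using equiv(3) g by blast
    ultimately show ?thesis using edge_htpy_trans edge_htpy_sym by blast
  qed
  then show ?case using w' by blast
qed

lemma Tl_htpy:
  assumes a: "fp_word S I P [a]" and h: "h \<in> carrier G"
  shows "edge_htpy adj (Cl l0) (F h [a]) (F h (subst (Tl a)))"
proof (cases a rule: lcar.cases)
  case (2 i p) then show ?thesis by simp
next
  case (1 t b)
  note a1 = this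
  have t: "t \<in> S" using a 1 by simp
  define y where "y = subst (Tl a)"
  have "y = subst (Tw [Inl (t, b)])" unfolding y_def 1 by simp
  then have yW: "y \<in> Wset" unfolding Wset_def using t by blast
  have ty: "fp_word S' I P (Tl a)" "fp_eval G (Tl a) = fp_letter_val G a" using Tl_props[OF a] by auto
  have yw: "fp_word S I P y" "fp_eval G y = fp_letter_val G a" using subst_props[OF ty(1)] ty y_def by auto
  have ry: "sw (rho y)" "fp_eval G (rho y) = fp_letter_val G a" using rho_props[OF yw(1)] yw by auto
  have ca: "cw [a]" using S_word_cw[OF a] .
  have h1: "edge_htpy adj (Cl l0) (F h y) (F h (rho y))"
    by (rule rho_htpy[OF yw(1) _ h]) (use yW in \<open>auto simp: Fin_def\<close>)
  have h2: "edge_htpy adj (Cl l0) (F h [a]) (F h (rho y))"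
  proof (rule F_cell_swap[OF a sw_word[OF ry(1)] h])
    show "fp_eval G [a] = fp_eval G (rho y)" using ry ca by simp
    show "butlast (F (h \<otimes> fp_eval G [a]) (fp_word_inv G [a] @ rho y)) \<in> Cl l0"
    proof (rule F_cell)
      show "fp_word S I P (fp_word_inv G [a] @ rho y)" using fp_word_winv[OF a] sw_word[OF ry(1)]
        by (simp only: fp_word_simps(4))
      show "fp_word_inv G [a] @ rho y \<noteq> []" by (simp add: fp_word_inv_def)
      show "h \<otimes> fp_eval G [a] \<in> carrier G" using h ca by simp
      show "fp_eval G (fp_word_inv G [a] @ rho y) = \<one>"
        using ca ry sw_cw[OF ry(1)] by (simp add: eval_append eval_winv)
      have "sw [a]" using a a1 by (simp add: sw_def)
      then have "sw (fp_word_inv G [a])" by (rule sw_winv)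
      then show "length (filter (\<lambda>x. \<not> isl x) (fp_word_inv G [a] @ rho y)) \<le> 1"
        using sw_count[OF ry(1)] sw_count by simp
      show "length (fp_word_inv G [a] @ rho y) + length (filter (\<lambda>x. \<not> isl x) (fp_word_inv G [a] @ rho y)) < l0"
        using \<open>sw (fp_word_inv G [a])\<close> sw_count[OF ry(1)] sw_count L1[OF yW] by (simp add: fp_word_inv_def l0_def)
    qed
  qed
  show ?thesis unfolding y_def[symmetric] using edge_htpy_trans[OF h2 edge_htpy_sym[OF h1]] .
qed

lemma Tw_htpy:
  "fp_word S I P w \<Longrightarrow> g \<in> carrier G \<Longrightarrow> edge_htpy adj (Cl l0) (F g w) (F g (subst (Tw w)))"
proof (induction w arbitrary: g)
  case Nil then show ?case by simp
next
  case (Cons x w)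
  have wx: "fp_word S I P [x]" "fp_word S I P w" using Cons.prems fp_word_Cons[where x=x and w=w] by simp_all
  have tx: "fp_word S I P (subst (Tl x))" "fp_eval G (subst (Tl x)) = fp_letter_val G x"
    using Tl_props[OF wx(1)] subst_props by auto
  have tw: "fp_word S I P (subst (Tw w))" "fp_eval G (subst (Tw w)) = fp_eval G w"
    using Tw_props[OF wx(2)] subst_props by auto
  have cx: "cw [x]" "cw w" "cw (subst (Tl x))" "cw (subst (Tw w))"
    using S_word_cw[OF wx(1)] S_word_cw[OF wx(2)] S_word_cw[OF tx(1)] S_word_cw[OF tw(1)] by auto
  have 1: "edge_htpy adj (Cl l0) (F g ([x] @ w)) (F g (subst (Tl x) @ w))"
    by (rule F_congR) (use Cons.prems cx tx Tl_htpy[OF wx(1)] in auto)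
  have gx: "g \<otimes> fp_eval G (subst (Tl x)) \<in> carrier G" using cx Cons.prems by simp
  have 2: "edge_htpy adj (Cl l0) (F g (subst (Tl x) @ w)) (F g (subst (Tl x) @ subst (Tw w)))"
    by (rule F_congL) (use Cons.prems cx tw Cons.IH[OF wx(2) gx] in auto)
  show ?case using edge_htpy_trans[OF 1 2] by simp
qed

lemma closed_Inl:
  assumes "fp_word S I P w" "fp_eval G w = \<one>" "g \<in> carrier G"
  shows "edge_htpy adj (Cl l0) (F g w) [Inl g]"
proof -
  have t: "fp_word S' I P (Tw w)" "fp_eval G (Tw w) = \<one>" using Tw_props[OF assms(1)] assms by auto
  then have "Tw w \<in> fp_normal_closure G S' I P R" using kernel by blast
  then have "edge_htpy adj (Cl l0) (F g (subst (Tw w))) [Inl g]" using NC_htpy assms(3) by blast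
  then show ?thesis using Tw_htpy[OF assms(1,3)] edge_htpy_trans by blast
qed

lemma closed_path:
  assumes p: "edge_path V adj p" "hd p = last p"
  shows "edge_htpy adj (Cl l0) p [hd p]"
proof -
  have Inl_case: "edge_htpy adj (Cl l0) q [Inl g]"
    if q: "q \<noteq> []" "successively adj q" "hd q = Inl g" "last q = Inl g" "g \<in> carrier G" for q g
  proof -
    have wf: "fp_word S I P (W q)" "F g (W q) = q" using W_F[OF q(1,2,3)] q(4) by auto
    have "last (F g (W q)) = Inl (g \<otimes> fp_eval G (W q))" using last_F[OF q(5) S_word_cw[OF wf(1)]] .
    then have "g \<otimes> fp_eval G (W q) = g" using wf q(4) by simp
    then have "fp_eval G (W q) = \<one>" using q(5) S_word_cw[OF wf(1)] by simp
    then show ?thesis using closed_Inl[OF wf(1) _ q(5)] wf(2) by simp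
  qed
  have pne: "p \<noteq> []" and sp: "successively adj p" and pV: "set p \<subseteq> V"
    using p(1) unfolding edge_path_succ by auto
  obtain v rest where pv: "p = v # rest" using pne by (cases p) auto
  show ?thesis
  proof (cases v)
    case (Inl g)
    have "g \<in> carrier G" using pV pv Inl by auto
    then show ?thesis using Inl_case[OF pne sp] pv Inl p(2) by simp
  next
    case (Inr A)
    show ?thesis
    proof (cases "rest = []")
      case True then show ?thesis using pv by simp
    next
      case False
      have a1: "adj v (hd rest)" and sr: "successively adj rest" using sp pv False by (auto simp: successively_Cons)
      obtain g where hr: "hd rest = Inl g" using a1 Inr by (cases "hd rest") auto
      have gc: "g \<in> carrier G" using adj_V[OF a1] hr by simp
      have lr: "last rest = v" using p(2) pv False by simp
      define q where "q = rest @ [Inl g]"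
      have sq: "successively adj q" unfolding q_def using sr a1 lr False hr by (simp add: successively_append_iff)
      have 1: "edge_htpy adj (Cl l0) q [Inl g]"
        by (rule Inl_case) (use sq gc False hr in \<open>auto simp: q_def\<close>)
      have 2: "edge_htpy adj (Cl l0) ([v] @ q @ [v]) ([v] @ [Inl g] @ [v])"
        using edge_htpy_cong[OF 1] .
      have 3: "edge_htpy adj (Cl l0) ([] @ [v, Inl g, v] @ []) ([] @ [v] @ [])"
        by (rule edge_htpy_bt[of adj, OF a1[unfolded hr]])
      have pb: "p = butlast p @ [v]" using pne lr pv False by (metis append_butlast_last_id last_ConsR)
      have 4: "edge_htpy adj (Cl l0) (butlast p @ [v, Inl g, v] @ []) (butlast p @ [v] @ [])"
        by (rule edge_htpy_bt[of adj, OF a1[unfolded hr]])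
      have e: "[v] @ q @ [v] = butlast p @ [v, Inl g, v]"
        using pb pv q_def by (metis append.assoc append_Cons append_Nil)
      have "edge_htpy adj (Cl l0) p ([v] @ q @ [v])"
        using 4 e pb by (metis append_Nil2 edge_htpy_sym)
      moreover have "edge_htpy adj (Cl l0) ([v] @ q @ [v]) [v]"
        using edge_htpy_trans[OF 2, of "[v]"] 3 by simp
      ultimately have "edge_htpy adj (Cl l0) p [v]" using edge_htpy_trans by blast
      then show ?thesis using pv by simp
    qed
  qed
qed

lemma reach: "v \<in> V \<Longrightarrow> \<exists>p. p \<noteq> [] \<and> set p \<subseteq> V \<and> successively adj p \<and> hd p = Inl \<one> \<and> last p = v"
proof (cases v)
  case (Inl g)
  assume "v \<in> V"
  then have g: "g \<in> carrier G" using Inl by simp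
  have s: "sw (sig g)" "fp_eval G (sig g) = g" using sig[OF g] by auto
  have "last (F \<one> (sig g)) = Inl g" using last_F[OF one_closed sw_cw[OF s(1)]] s g by simp
  then show ?thesis using F_path[OF sw_word[OF s(1)] one_closed] Inl by (intro exI[of _ "F \<one> (sig g)"]) auto
next
  case (Inr B)
  assume vV: "v \<in> V"
  obtain i A where B: "B = (i, A)" by force
  then obtain k where k: "k \<in> carrier G" "i \<in> I" "A = k <# P i" using vV Inr V_Inr by auto
  have s: "sw (sig k)" "fp_eval G (sig k) = k" using sig[OF k(1)] by auto
  have l: "last (F \<one> (sig k)) = Inl k" using last_F[OF one_closed sw_cw[OF s(1)]] s k by simp
  have ad: "adj (Inl k) v" using vV Inr B k by (simp add: adj_LR coset_self)
  have fp: "successively adj (F \<one> (sig k)) \<and> set (F \<one> (sig k)) \<subseteq> V"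
    using F_path[OF sw_word[OF s(1)] one_closed] .
  show ?thesis
    by (intro exI[of _ "F \<one> (sig k) @ [v]"]) (use fp l ad vV in \<open>auto simp: successively_append_iff\<close>)
qed

lemma connected: "u \<in> V \<Longrightarrow> v \<in> V \<Longrightarrow> \<exists>p. edge_path V adj p \<and> hd p = u \<and> last p = v"
proof -
  assume uv: "u \<in> V" "v \<in> V"
  obtain pu where pu: "pu \<noteq> []" "set pu \<subseteq> V" "successively adj pu" "hd pu = Inl \<one>" "last pu = u"
    using reach[OF uv(1)] by blast
  obtain pv where pv: "pv \<noteq> []" "set pv \<subseteq> V" "successively adj pv" "hd pv = Inl \<one>" "last pv = v"
    using reach[OF uv(2)] by blast
  obtain x r where xr: "pv = x # r" using pv(1) by (cases pv) auto
  have x: "x = Inl \<one>" using xr pv by simp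
  have s1: "successively adj (rev pu)" using pu(3) by (simp add: successively_mono adj_sym)
  have s2: "successively adj r" and a: "r \<noteq> [] \<Longrightarrow> adj (Inl \<one>) (hd r)"
    using pv(3) xr x by (auto simp: successively_Cons)
  have lr: "last (rev pu) = Inl \<one>" using pu by (simp add: last_rev)
  have hr: "hd (rev pu) = u" using pu by (simp add: hd_rev)
  have "successively adj (rev pu @ r)" using s1 s2 a lr pu(1) by (auto simp: successively_append_iff)
  moreover have "set (rev pu @ r) \<subseteq> V" using pu pv xr by auto
  moreover have "hd (rev pu @ r) = u" using hr pu(1) by simp
  moreover have "last (rev pu @ r) = v" using lr pv(5) xr x by (cases "r = []") auto
  ultimately show ?thesis unfolding edge_path_succ using pu(1) by (intro exI[of _ "rev pu @ r"]) auto
qed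

theorem fwd_SC: "complex_simply_connected V adj (Cl l0)"
  unfolding complex_simply_connected_def
proof (intro conjI)
  show "V \<noteq> {}" using V_Inl one_closed by blast
  show "\<forall>u\<in>V. \<forall>v\<in>V. \<exists>p. edge_path V adj p \<and> hd p = u \<and> last p = v" using connected by blast
  show "\<forall>p. edge_path V adj p \<and> hd p = last p \<longrightarrow> edge_htpy adj (Cl l0) p [hd p]" using closed_path by blast
qed

end


context cpair begin


definition C1 :: "nat \<Rightarrow> ('a, 'i) vtx list set" where
  "C1 l = {c \<in> Cl l. isl (hd c) \<and> length (filter (\<lambda>v. \<not> isl v) c) \<le> 1}"

lemma two_split:
  assumes "length (filter Q c) \<ge> 2"
  obtains x a y b z where "c = x @ [a] @ y @ [b] @ z" "Q a" "Q b" "\<forall>v \<in> set x. \<not> Q v"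
proof -
  have "\<exists>v \<in> set c. Q v" using assms by (metis filter_False le_zero_eq length_0_conv zero_neq_numeral)
  then obtain x a zs where 1: "c = x @ a # zs" "Q a" "\<forall>v \<in> set x. \<not> Q v" by (metis split_list_first_propE)
  then have "length (filter Q zs) \<ge> 1" using assms by simp
  then have "\<exists>v \<in> set zs. Q v" by (metis filter_False le_zero_eq length_0_conv one_neq_zero)
  then obtain y b z where 2: "zs = y @ b # z" "Q b" by (metis split_list_propE)
  show ?thesis using that[of x a y b z] 1 2 by simp
qed

lemma unicone_eq:
  assumes "unicone c" "a \<in> set c" "b \<in> set c" "\<not> isl a" "\<not> isl b"
  shows "a = b"
proof -
  have fin: "finite {v \<in> set c. \<exists>c'. v = Inr c'}" by simp
  have "a \<in> {v \<in> set c. \<exists>c'. v = Inr c'}" "b \<in> {v \<in> set c. \<exists>c'. v = Inr c'}"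
    using assms by (cases a; cases b; auto)+
  then show ?thesis using assms(1) card_le_Suc0_iff_eq[OF fin] unfolding unicone_def by auto
qed

lemma unicone_subset: "unicone c \<Longrightarrow> set c' \<subseteq> set c \<Longrightarrow> unicone c'"
  unfolding unicone_def
  by (rule order.trans[OF card_mono]) auto

lemma Cl_intro: "c \<noteq> [] \<Longrightarrow> successively adj (c @ [hd c]) \<Longrightarrow> unicone c \<Longrightarrow> length c < l \<Longrightarrow> c \<in> Cl l"
  unfolding unicone_cells_def edge_loop_succ by simp

lemma Cl_D: "c \<in> Cl l \<Longrightarrow> c \<noteq> [] \<and> successively adj (c @ [hd c]) \<and> unicone c \<and> length c < l"
  unfolding unicone_cells_def edge_loop_succ by simp

lemma succ_D1: "successively Q (xs @ ys) \<Longrightarrow> successively Q xs"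
  by (simp add: successively_append_iff)
lemma succ_D2: "successively Q (xs @ ys) \<Longrightarrow> successively Q ys"
  by (simp add: successively_append_iff)
lemma succ_join: "successively Q (xs @ [a]) \<Longrightarrow> successively Q ([a] @ ys) \<Longrightarrow> successively Q (xs @ [a] @ ys)"
  by (cases ys) (auto simp: successively_append_iff)
lemma succ_pair: "Q a b \<Longrightarrow> successively Q ([a] @ [b])" by simp

lemma sim_Inl:
  "length c = n \<Longrightarrow> c \<in> Cl l \<Longrightarrow> isl (hd c) \<Longrightarrow> edge_htpy adj (C1 l) (P1 @ [hd c] @ P2) (P1 @ c @ [hd c] @ P2)"
proof (induction n arbitrary: c P1 P2 rule: less_induct)
  case (less n)
  note cD = Cl_D[OF less.prems(2)]
  show ?case
  proof (cases "length (filter (\<lambda>v. \<not> isl v) c) \<le> 1")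
    case True
    then have "c \<in> C1 l" using less.prems unfolding C1_def by simp
    then show ?thesis using edge_htpy_cell cD by metis
  next
    case False
    then have "length (filter (\<lambda>v. \<not> isl v) c) \<ge> 2" by simp
    then obtain x a y b z where dec: "c = x @ [a] @ y @ [b] @ z" "\<not> isl a" "\<not> isl b" "\<forall>v \<in> set x. isl v"
      by (rule two_split) auto
    have ab: "a = b" using unicone_eq[of c a b] cD dec by simp
    have xne: "x \<noteq> []" using dec less.prems(3) by (cases x) auto
    have hdc: "hd c = hd x" using dec xne by simp
    define g where "g = hd c"
    have big: "successively adj (x @ [a] @ y @ [a] @ z @ [g])" using cD dec ab g_def by simp
    have yne: "y \<noteq> []"
    proof
      assume "y = []"
      then have "adj a a" using big by (simp add: successively_append_iff)
      then show False using dec(2) by (cases a) auto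
    qed
    then obtain h y' where hy: "y = h # y'" by (cases y) auto
    have ah: "adj a h" using big hy by (simp add: successively_append_iff)
    have hl: "isl h" using ah dec(2) by (cases a; cases h) auto
    define L1 where "L1 = x @ [a] @ z"
    define L2 where "L2 = h # y' @ [a]"
    have hL1: "hd L1 = g" using L1_def xne hdc g_def by simp
    have hL2: "hd L2 = h" using L2_def by simp
    have sL1: "successively adj (L1 @ [hd L1])"
    proof -
      have "successively adj (x @ [a])" using succ_D1[of adj "x @ [a]" "y @ [a] @ z @ [g]"] big by simp
      moreover have "successively adj ([a] @ z @ [g])" using succ_D2[of adj "x @ [a] @ y" "[a] @ z @ [g]"] big by simp
      ultimately show ?thesis using succ_join hL1 unfolding L1_def by fastforce
    qed
    have sL2: "successively adj (L2 @ [hd L2])"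
    proof -
      have "successively adj (x @ [a] @ (y @ [a]) @ (z @ [g]))" using big by simp
      then have "successively adj (y @ [a])" using succ_D1 succ_D2 by metis
      then have yf: "successively adj ((h # y') @ [a])" using hy by simp
      have "successively adj ((h # y') @ [a] @ [h])" by (rule succ_join[OF yf succ_pair[of adj a h, OF ah]])
      then show ?thesis unfolding L2_def by simp
    qed
    have uL1: "unicone L1" using unicone_subset[of c L1] cD dec ab L1_def by auto
    have uL2: "unicone L2" using unicone_subset[of c L2] cD dec ab L2_def hy by auto
    have lL1: "length L1 < n" using L1_def dec less.prems(1) by simp
    have lL2: "length L2 < n" using L2_def dec less.prems(1) hy by simp
    have L1C: "L1 \<in> Cl l" by (rule Cl_intro) (use sL1 uL1 lL1 less.prems cD L1_def in auto)
    have L2C: "L2 \<in> Cl l" by (rule Cl_intro) (use sL2 uL2 lL2 less.prems cD L2_def in auto)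
    have isl1: "isl (hd L1)" using hL1 less.prems(3) g_def by simp
    have isl2: "isl (hd L2)" using hL2 hl by simp
    have 1: "edge_htpy adj (C1 l) (P1 @ [g] @ P2) (P1 @ L1 @ [g] @ P2)"
      using less.IH[OF lL1 refl L1C isl1, of P1 P2] hL1 by simp
    have 2: "edge_htpy adj (C1 l) (P1 @ L1 @ [g] @ P2) ((P1 @ x) @ [a, h, a] @ (z @ [g] @ P2))"
      using edge_htpy_sym[OF edge_htpy_bt[of adj, OF ah, of "C1 l" "P1 @ x" "z @ [g] @ P2"]] L1_def by simp
    have 3: "edge_htpy adj (C1 l) ((P1 @ x @ [a]) @ [h] @ ([a] @ z @ [g] @ P2)) ((P1 @ x @ [a]) @ L2 @ [h] @ ([a] @ z @ [g] @ P2))"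
      using less.IH[OF lL2 refl L2C isl2, of "P1 @ x @ [a]" "[a] @ z @ [g] @ P2"] hL2 by simp
    have 4: "edge_htpy adj (C1 l) ((P1 @ x @ [a, h] @ y') @ [a, h, a] @ (z @ [g] @ P2)) ((P1 @ x @ [a, h] @ y') @ [a] @ (z @ [g] @ P2))"
      by (rule edge_htpy_bt[of adj, OF ah])
    have e3: "(P1 @ x @ [a]) @ [h] @ ([a] @ z @ [g] @ P2) = (P1 @ x) @ [a, h, a] @ (z @ [g] @ P2)" by simp
    have e4: "(P1 @ x @ [a]) @ L2 @ [h] @ ([a] @ z @ [g] @ P2) = (P1 @ x @ [a, h] @ y') @ [a, h, a] @ (z @ [g] @ P2)"
      unfolding L2_def by simp
    have e5: "(P1 @ x @ [a, h] @ y') @ [a] @ (z @ [g] @ P2) = P1 @ c @ [g] @ P2"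
      using dec ab hy by simp
    have "edge_htpy adj (C1 l) (P1 @ [g] @ P2) (P1 @ c @ [g] @ P2)"
      using edge_htpy_trans[OF edge_htpy_trans[OF 1 2] edge_htpy_trans[OF 3[unfolded e3 e4] 4[unfolded e5]]] .
    then show ?thesis using g_def by simp
  qed
qed

lemma sim_cell:
  assumes "c \<in> Cl l"
  shows "edge_htpy adj (C1 l) (P1 @ [hd c] @ P2) (P1 @ c @ [hd c] @ P2)"
proof (cases "isl (hd c)")
  case True then show ?thesis using sim_Inl[OF refl assms] by blast
next
  case False
  note cD = Cl_D[OF assms]
  obtain a c' where ac: "c = a # c'" using cD by (cases c) auto
  have big: "successively adj (a # c' @ [a])" using cD ac by simp
  have cne: "c' \<noteq> []"
  proof
    assume "c' = []"
    then have "adj a a" using big by simp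
    then show False using False ac by (cases a) auto
  qed
  then obtain h y' where hy: "c' = h # y'" by (cases c') auto
  have ah: "adj a h" using big hy by simp
  have ha: "adj h a" using ah adj_sym by blast
  have hl: "isl h" using ah False ac by (cases a; cases h) auto
  define L where "L = h # y' @ [a]"
  have sL: "successively adj (L @ [hd L])"
  proof -
    have "successively adj ([a] @ (h # y' @ [a]))" using big hy by simp
    then have yf: "successively adj ((h # y') @ [a])" using succ_D2 by fastforce
    have "successively adj ((h # y') @ [a] @ [h])" by (rule succ_join[OF yf succ_pair[of adj a h, OF ah]])
    then show ?thesis unfolding L_def by simp
  qed
  have uL: "unicone L" using unicone_subset[of c L] cD ac hy L_def by auto
  have LC: "L \<in> Cl l" by (rule Cl_intro) (use sL uL cD ac hy L_def in auto)
  have isl2: "isl (hd L)" using hl L_def by simp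
  have 1: "edge_htpy adj (C1 l) (P1 @ [a] @ P2) ((P1 @ [a]) @ [h] @ ([a] @ P2))"
    using edge_htpy_sym[OF edge_htpy_bt[of adj, OF ah, of "C1 l" P1 P2]] by simp
  have 2: "edge_htpy adj (C1 l) ((P1 @ [a]) @ [h] @ ([a] @ P2)) ((P1 @ [a]) @ L @ [h] @ ([a] @ P2))"
    using sim_Inl[OF refl LC isl2, of "P1 @ [a]" "[a] @ P2"] L_def by simp
  have 3: "edge_htpy adj (C1 l) ((P1 @ [a, h] @ y') @ [a, h, a] @ P2) ((P1 @ [a, h] @ y') @ [a] @ P2)"
    by (rule edge_htpy_bt[of adj, OF ah])
  have e: "(P1 @ [a]) @ L @ [h] @ ([a] @ P2) = (P1 @ [a, h] @ y') @ [a, h, a] @ P2" unfolding L_def by simp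
  have e2: "(P1 @ [a, h] @ y') @ [a] @ P2 = P1 @ c @ [hd c] @ P2" using ac hy by simp
  show ?thesis using edge_htpy_trans[OF edge_htpy_trans[OF 1 2] 3[folded e, unfolded e2]] ac by simp
qed

lemma htpy_C1: "edge_htpy adj (Cl l) p q \<Longrightarrow> edge_htpy adj (C1 l) p q"
proof -
  assume h: "edge_htpy adj (Cl l) p q"
  have "(symclp (htpy_step adj (C1 l)))\<^sup>*\<^sup>* (id p) (id q)"
  proof (rule rtranclp_symclp_lift[where f=id])
    fix x y assume "htpy_step adj (Cl l) x y"
    then have "edge_htpy adj (C1 l) x y"
    proof cases
      case (backtrack a b u v) then show ?thesis using edge_htpy_bt[of adj a b "C1 l" u v] by simp
    next
      case (cell c u v) then show ?thesis using sim_cell[of c l u v] by simp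
    qed
    then show "(symclp (htpy_step adj (C1 l)))\<^sup>*\<^sup>* (id x) (id y)" unfolding edge_htpy_def by simp
  next
    show "(symclp (htpy_step adj (Cl l)))\<^sup>*\<^sup>* p q" using h unfolding edge_htpy_def .
  qed
  then show ?thesis unfolding edge_htpy_def by simp
qed

end


context cpair begin

lemma fp_equiv_word: "fp_equiv G S' I P w w' \<Longrightarrow> fp_word S' I P w \<Longrightarrow> fp_word S' I P w'"
  unfolding fp_equiv_def by (induction rule: rtranclp_induct) (auto elim: symclpE)

lemma fp_step_ctx: "fp_step G u v \<Longrightarrow> fp_step G (x @ u @ y) (x @ v @ y)"
proof (induction rule: fp_step.induct)
  case (cancel u s b v) then show ?case using fp_step.cancel[of G "x @ u" s b "v @ y"] by simp
next
  case (merge u i p q v) then show ?case using fp_step.merge[of G "x @ u" i p q "v @ y"] by simp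
next
  case (unit u i v) then show ?case using fp_step.unit[of G "x @ u" i "v @ y"] by simp
qed

lemma fp_equiv_ctx:
  assumes "fp_equiv G S' I P w w'" "fp_word S' I P x" "fp_word S' I P y"
  shows "fp_equiv G S' I P (x @ w @ y) (x @ w' @ y)"
  unfolding fp_equiv_def
proof (rule rtranclp_symclp_lift[where f="\<lambda>w. x @ w @ y"])
  fix u v assume "fp_word S' I P u \<and> fp_word S' I P v \<and> fp_step G u v"
  then show "(symclp (\<lambda>u v. fp_word S' I P u \<and> fp_word S' I P v \<and> fp_step G u v))\<^sup>*\<^sup>* (x @ u @ y) (x @ v @ y)"
    using assms(2,3) fp_step_ctx by (intro r_into_rtranclp symclpI1) auto
next
  show "(symclp (\<lambda>u v. fp_word S' I P u \<and> fp_word S' I P v \<and> fp_step G u v))\<^sup>*\<^sup>* w w'"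
    using assms(1) unfolding fp_equiv_def .
qed

lemma fp_equiv_step: "fp_step G u v \<Longrightarrow> fp_word S' I P u \<Longrightarrow> fp_word S' I P v \<Longrightarrow> fp_equiv G S' I P u v"
  unfolding fp_equiv_def by (intro r_into_rtranclp symclpI1) auto

lemma fp_equiv_sym: "fp_equiv G S' I P u v \<Longrightarrow> fp_equiv G S' I P v u"
  unfolding fp_equiv_def by (rule rtranclp_symclp_sym)

lemma fp_equiv_trans: "fp_equiv G S' I P u v \<Longrightarrow> fp_equiv G S' I P v w \<Longrightarrow> fp_equiv G S' I P u w"
  unfolding fp_equiv_def by (rule rtranclp_trans)

lemma pair_cancel:
  assumes "fp_word S' I P [a]"
  shows "fp_equiv G S' I P [fp_letter_inv G a, a] []"
proof (cases a rule: lcar.cases)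
  case (1 s b)
  have "fp_step G ([] @ [Inl (s, \<not> b), Inl (s, \<not> \<not> b)] @ []) ([] @ [])" by (rule fp_step.cancel)
  then show ?thesis using 1 assms by (intro fp_equiv_step) auto
next
  case (2 i p)
  have ip: "i \<in> I" "p \<in> P i" "p \<in> carrier G" using assms 2 P_car by auto
  have ip': "inv p \<in> P i" using ip subgroup.m_inv_closed[OF subg] by blast
  have "fp_step G ([] @ [Inr (i, inv p), Inr (i, p)] @ []) ([] @ [Inr (i, inv p \<otimes> p)] @ [])" by (rule fp_step.merge)
  then have 1: "fp_equiv G S' I P [Inr (i, inv p), Inr (i, p)] [Inr (i, \<one>)]"
    using ip ip' subgroup.one_closed[OF subg] by (intro fp_equiv_step) auto
  have "fp_step G ([] @ [Inr (i, \<one>)] @ []) ([] @ [])" by (rule fp_step.unit)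
  then have 2: "fp_equiv G S' I P [Inr (i, \<one>)] []"
    using ip subgroup.one_closed[OF subg] by (intro fp_equiv_step) auto
  show ?thesis using fp_equiv_trans[OF 1 2] 2 by (simp add: \<open>a = Inr (i, p)\<close>)
qed

lemma inv_cancel: "fp_word S' I P x \<Longrightarrow> fp_equiv G S' I P (fp_word_inv G x @ x) []"
proof (induction x)
  case Nil then show ?case by (simp add: fp_equiv_def)
next
  case (Cons a x)
  have wa: "fp_word S' I P [a]" "fp_word S' I P x" using Cons.prems fp_word_Cons[where x=a and w=x] by simp_all
  have 1: "fp_equiv G S' I P (fp_word_inv G x @ [fp_letter_inv G a, a] @ x) (fp_word_inv G x @ [] @ x)"
    by (rule fp_equiv_ctx[OF pair_cancel[OF wa(1)]]) (use fp_word_winv[OF wa(2)] wa in auto)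
  show ?case using fp_equiv_trans[OF 1] Cons.IH[OF wa(2)] by simp
qed

lemma step_eval: "fp_step G u v \<Longrightarrow> fp_word S' I P u \<Longrightarrow> S' \<subseteq> carrier G \<Longrightarrow> fp_eval G u = fp_eval G v"
proof (induction rule: fp_step.induct)
  case (cancel u s b v)
  then have c: "cw u" "cw v" "s \<in> carrier G" using fp_word_cw[OF _ cancel.prems(2)] by auto
  have "fp_eval G [Inl (s, b), Inl (s, \<not> b)] = \<one>" using c by (cases b) auto
  then show ?case using c by (simp add: eval_append)
next
  case (merge u i p q v)
  then have c: "cw u" "cw v" "p \<in> carrier G" "q \<in> carrier G" using fp_word_cw[OF _ merge.prems(2)] P_car by auto
  then show ?case by (simp add: eval_append m_assoc)
next
  case (unit u i v)
  then have c: "cw u" "cw v" using fp_word_cw[OF _ unit.prems(2)] by auto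
  then show ?case by (simp add: eval_append)
qed

lemma equiv_eval: "fp_equiv G S' I P u v \<Longrightarrow> fp_word S' I P u \<Longrightarrow> S' \<subseteq> carrier G \<Longrightarrow> fp_eval G u = fp_eval G v"
  unfolding fp_equiv_def
proof (induction rule: rtranclp_induct)
  case (step y z)
  have "fp_eval G y = fp_eval G z" using step(2) step_eval step.prems(2) by (auto elim!: symclpE)
  then show ?case using step by simp
qed simp

lemma W_split:
  "successively adj (x @ [Inl g]) \<Longrightarrow> x = [] \<or> isl (hd x) \<Longrightarrow> W (x @ [Inl g] @ y) = W (x @ [Inl g]) @ W (Inl g # y)"
proof (induction "length x" arbitrary: x rule: less_induct)
  case less
  show ?case
  proof (cases x)
    case Nil then show ?thesis by simp
  next
    case (Cons v x1)
    then obtain a where va: "v = Inl a" using less.prems(2) by (cases v) auto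
    show ?thesis
    proof (cases x1)
      case Nil then show ?thesis using Cons va by simp
    next
      case (Cons v2 x2)
      show ?thesis
      proof (cases v2)
        case (Inl b)
        have "W (x1 @ [Inl g] @ y) = W (x1 @ [Inl g]) @ W (Inl g # y)"
          by (rule less.hyps) (use less.prems \<open>x = v # x1\<close> Cons Inl in \<open>auto simp: successively_Cons\<close>)
        then show ?thesis using \<open>x = v # x1\<close> Cons va Inl by simp
      next
        case (Inr A)
        show ?thesis
        proof (cases x2)
          case Nil then show ?thesis using \<open>x = v # x1\<close> Cons va Inr by simp
        next
          case (Cons v3 x3)
          then obtain b where vb: "v3 = Inl b" using less.prems(1) \<open>x = v # x1\<close> \<open>x1 = v2 # x2\<close> Inr
            by (cases v3) (auto simp: successively_Cons)
          have "W (x2 @ [Inl g] @ y) = W (x2 @ [Inl g]) @ W (Inl g # y)"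
            by (rule less.hyps) (use less.prems \<open>x = v # x1\<close> \<open>x1 = v2 # x2\<close> Cons vb in \<open>auto simp: successively_Cons\<close>)
          then show ?thesis using \<open>x = v # x1\<close> \<open>x1 = v2 # x2\<close> Cons va vb Inr by simp
        qed
      qed
    qed
  qed
qed

end

locale bwd = cpair2 G I P S for G :: "('a, 'b) monoid_scheme" (structure) and I :: "'i set" and P S +
  fixes l :: nat
  assumes finI: "finite I" and SC: "complex_simply_connected V adj (unicone_cells G I P S l)"
begin

definition "L = l + 3"
definition "Swl = {w :: ('a, 'i) fp_letter list. set w \<subseteq> Inl ` (S \<times> UNIV) \<and> length w \<le> L}"
definition "rel1 a b = (a @ [Inr (fst b, inv (fp_eval G a) \<otimes> inv (fp_eval G (snd b)))] @ snd b)"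
definition "Rb = {w \<in> Swl. fp_eval G w = \<one>} \<union>
   (\<lambda>(a, b). rel1 a b) ` {(a, i, b). a \<in> Swl \<and> i \<in> I \<and> b \<in> Swl \<and> inv (fp_eval G a) \<otimes> inv (fp_eval G b) \<in> P i}"

lemma fin_Swl: "finite Swl"
  unfolding Swl_def by (rule finite_lists_length_le) (use finS in auto)

lemma fin_Rb: "finite Rb"
proof -
  have "finite (Swl \<times> I \<times> Swl)" using fin_Swl finI by simp
  then have "finite {(a, i, b). a \<in> Swl \<and> i \<in> I \<and> b \<in> Swl \<and> inv (fp_eval G a) \<otimes> inv (fp_eval G b) \<in> P i}"
    by (rule rev_finite_subset) auto
  then show ?thesis unfolding Rb_def using fin_Swl by simp
qed

lemma Swl_sw: "w \<in> Swl \<Longrightarrow> sw w"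
  unfolding Swl_def sw_def fp_word_def by auto

lemma Rb_props: "r \<in> Rb \<Longrightarrow> fp_word S I P r \<and> fp_eval G r = \<one>"
proof -
  assume "r \<in> Rb"
  then consider (a) "r \<in> Swl" "fp_eval G r = \<one>"
    | (b) a i b where "a \<in> Swl" "i \<in> I" "b \<in> Swl" "inv (fp_eval G a) \<otimes> inv (fp_eval G b) \<in> P i" "r = rel1 a (i, b)"
    unfolding Rb_def by auto
  then show ?thesis
  proof cases
    case a then show ?thesis using Swl_sw sw_word by blast
  next
    case b
    have c: "cw a" "cw b" using b Swl_sw sw_cw by auto
    have "fp_eval G r = fp_eval G a \<otimes> (inv (fp_eval G a) \<otimes> inv (fp_eval G b)) \<otimes> fp_eval G b"
      using b c by (simp add: rel1_def eval_append m_assoc)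
    also have "\<dots> = \<one>" using c by (simp add: m_assoc[symmetric])
    finally show ?thesis using b Swl_sw[of a] Swl_sw[of b] by (simp add: rel1_def sw_def)
  qed
qed

lemma sw_Swl: "sw w \<Longrightarrow> length w \<le> L \<Longrightarrow> w \<in> Swl"
proof -
  assume a: "sw w" "length w \<le> L"
  have "set w \<subseteq> Inl ` (S \<times> UNIV)"
  proof
    fix x assume x: "x \<in> set w"
    then have "isl x" "fp_word S I P [x]" using a by (auto simp: sw_def fp_word_def)
    then show "x \<in> Inl ` (S \<times> UNIV)" by (cases x rule: lcar.cases) auto
  qed
  then show ?thesis using a unfolding Swl_def by simp
qed

lemma Rb_mem:
  assumes w: "fp_word S I P w" "fp_eval G w = \<one>" "length w \<le> L" "length (filter (\<lambda>x. \<not> isl x) w) \<le> 1"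
  shows "w \<in> Rb"
proof (cases "length (filter (\<lambda>x. \<not> isl x) w) = 0")
  case True
  then have "sw w" using w unfolding sw_def by (simp add: filter_empty_conv)
  then show ?thesis using sw_Swl w unfolding Rb_def by simp
next
  case False
  then have "filter (\<lambda>x. \<not> isl x) w \<noteq> []" by auto
  then have ex: "\<exists>x \<in> set w. \<not> isl x" using filter_False by metis
  obtain a x b where d: "w = a @ x # b" "\<not> isl x" "\<forall>v \<in> set a. \<not> \<not> isl v"
    by (rule split_list_first_propE[OF ex])
  have fa: "filter (\<lambda>x. \<not> isl x) a = []" using d(3) by (simp add: filter_False)
  have "length (filter (\<lambda>x. \<not> isl x) w) = Suc (length (filter (\<lambda>x. \<not> isl x) b))"
    using d(1,2) fa by simp
  then have "filter (\<lambda>x. \<not> isl x) b = []" using w(4) by simp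
  then have bl: "\<forall>v \<in> set b. isl v" by (metis (mono_tags, lifting) filter_empty_conv)
  have wab: "fp_word S I P a" "fp_word S I P b" using w(1) d(1) fp_word_simps(4) fp_word_Cons by blast+
  have sab: "sw a" "sw b" using d(3) bl wab by (auto simp: sw_def)
  obtain i p where x: "x = Inr (i, p)" using d(2) by (cases x rule: lcar.cases) auto
  have ip: "i \<in> I" "p \<in> P i" "p \<in> carrier G" using w(1) d x P_car by auto
  have c: "cw a" "cw b" using sab sw_cw by auto
  have h1: "fp_eval G a \<otimes> p \<otimes> fp_eval G b = \<one>" using w(2) d x c ip by (simp add: eval_append m_assoc)
  have ec: "fp_eval G a \<in> carrier G" "fp_eval G b \<in> carrier G" using c by auto
  have e: "inv (fp_eval G a) \<otimes> (fp_eval G a \<otimes> p \<otimes> fp_eval G b) \<otimes> inv (fp_eval G b) = p"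
    using ec ip by (simp add: m_assoc)
  have pe: "p = inv (fp_eval G a) \<otimes> inv (fp_eval G b)" using e unfolding h1 using ec by simp
  have "a \<in> Swl" "b \<in> Swl" using sab sw_Swl w(3) d by auto
  moreover have "w = rel1 a (i, b)" unfolding rel1_def using d x pe by simp
  ultimately show ?thesis unfolding Rb_def using ip pe by blast
qed

abbreviation "NCs \<equiv> fp_normal_closure G S I P Rb"

lemma NC_word: "w \<in> NCs \<Longrightarrow> fp_word S I P w"
proof (induction rule: fp_normal_closure.induct)
  case (conj w r u) then show ?case using Rb_props fp_word_winv by auto
next
  case (conj_inv w r u) then show ?case using Rb_props fp_word_winv by auto
next
  case (equiv w w') then show ?case using fp_equiv_word by blast
qed simp

lemma NC_eval: "w \<in> NCs \<Longrightarrow> fp_eval G w = \<one>"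
proof (induction rule: fp_normal_closure.induct)
  case (conj w r u)
  have c: "cw u" "cw r" "cw w" using conj Rb_props NC_word fp_word_cw[OF _ S_car] by blast+
  then show ?case using conj Rb_props[of r] by (simp add: eval_append eval_winv)
next
  case (conj_inv w r u)
  have c: "cw u" "cw r" "cw w" using conj_inv Rb_props NC_word fp_word_cw[OF _ S_car] by blast+
  then show ?case using conj_inv Rb_props[of r] by (simp add: eval_append eval_winv)
next
  case (equiv w w') then show ?case using equiv_eval[OF equiv(2)] NC_word S_car by metis
qed simp

definition cong :: "('a, 'i) fp_letter list \<Rightarrow> ('a, 'i) fp_letter list \<Rightarrow> bool" where
  "cong w w' \<longleftrightarrow> (\<forall>x y. fp_word S I P x \<longrightarrow> fp_word S I P y \<longrightarrow> (x @ w @ y \<in> NCs \<longleftrightarrow> x @ w' @ y \<in> NCs))"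

lemma cong_refl[simp]: "cong w w" by (simp add: cong_def)
lemma cong_sym: "cong w w' \<Longrightarrow> cong w' w" by (simp add: cong_def)
lemma cong_trans: "cong u v \<Longrightarrow> cong v w \<Longrightarrow> cong u w" by (simp add: cong_def)
lemma cong_ctx: "cong w w' \<Longrightarrow> fp_word S I P a \<Longrightarrow> fp_word S I P b \<Longrightarrow> cong (a @ w @ b) (a @ w' @ b)"
  unfolding cong_def
proof (intro allI impI)
  fix x y assume h: "\<forall>x y. fp_word S I P x \<longrightarrow> fp_word S I P y \<longrightarrow> (x @ w @ y \<in> NCs) = (x @ w' @ y \<in> NCs)"
    "fp_word S I P a" "fp_word S I P b" "fp_word S I P x" "fp_word S I P y"
  then have "(x @ a) @ w @ (b @ y) \<in> NCs \<longleftrightarrow> (x @ a) @ w' @ (b @ y) \<in> NCs"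
    using h(1)[rule_format, of "x @ a" "b @ y"] by simp
  then show "(x @ (a @ w @ b) @ y \<in> NCs) = (x @ (a @ w' @ b) @ y \<in> NCs)" by simp
qed

lemma cong_equiv: "fp_equiv G S I P w w' \<Longrightarrow> fp_word S I P w \<Longrightarrow> cong w w'"
  unfolding cong_def
proof (intro allI impI)
  fix x y assume h: "fp_equiv G S I P w w'" "fp_word S I P w" "fp_word S I P x" "fp_word S I P y"
  have e: "fp_equiv G S I P (x @ w @ y) (x @ w' @ y)" using fp_equiv_ctx[OF h(1,3,4)] .
  show "(x @ w @ y \<in> NCs) = (x @ w' @ y \<in> NCs)"
    using fp_normal_closure.equiv[OF _ e] fp_normal_closure.equiv[OF _ fp_equiv_sym[OF e]] by blast
qed

lemma cong_rel: "r \<in> Rb \<Longrightarrow> cong r []"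
  unfolding cong_def
proof (intro allI impI)
  fix x y assume r: "r \<in> Rb" and xy: "fp_word S I P x" "fp_word S I P y"
  have wr: "fp_word S I P r" using Rb_props r by blast
  show "(x @ r @ y \<in> NCs) = (x @ [] @ y \<in> NCs)"
  proof
    assume h: "x @ r @ y \<in> NCs"
    have 1: "x @ fp_word_inv G r @ fp_word_inv G x @ (x @ r @ y) \<in> NCs"
      by (rule fp_normal_closure.conj_inv[OF h r xy(1)])
    have e1: "fp_equiv G S I P ((x @ fp_word_inv G r) @ (fp_word_inv G x @ x) @ (r @ y)) ((x @ fp_word_inv G r) @ [] @ (r @ y))"
      by (rule fp_equiv_ctx[OF inv_cancel]) (use xy wr fp_word_winv in auto)
    have e2: "fp_equiv G S I P (x @ (fp_word_inv G r @ r) @ y) (x @ [] @ y)"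
      by (rule fp_equiv_ctx[OF inv_cancel]) (use xy wr fp_word_winv in auto)
    have e1': "fp_equiv G S I P (x @ fp_word_inv G r @ fp_word_inv G x @ (x @ r @ y)) (x @ fp_word_inv G r @ r @ y)"
      using e1 by simp
    have e2': "fp_equiv G S I P (x @ fp_word_inv G r @ r @ y) (x @ [] @ y)"
      using e2 by simp
    have "fp_equiv G S I P (x @ fp_word_inv G r @ fp_word_inv G x @ (x @ r @ y)) (x @ [] @ y)"
      using fp_equiv_trans[OF e1' e2'] .
    then show "x @ [] @ y \<in> NCs" using fp_normal_closure.equiv[OF 1] by blast
  next
    assume h: "x @ [] @ y \<in> NCs"
    then have "x @ y \<in> NCs" by simp
    then have 1: "x @ r @ fp_word_inv G x @ (x @ y) \<in> NCs"
      by (rule fp_normal_closure.conj[OF _ r xy(1)])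
    have e1: "fp_equiv G S I P ((x @ r) @ (fp_word_inv G x @ x) @ y) ((x @ r) @ [] @ y)"
      by (rule fp_equiv_ctx[OF inv_cancel]) (use xy wr fp_word_winv in auto)
    then show "x @ r @ y \<in> NCs" using fp_normal_closure.equiv[OF 1] by simp
  qed
qed

lemma cong_NC: "cong w [] \<Longrightarrow> w \<in> NCs"
  unfolding cong_def using fp_normal_closure.empty[of G S I P Rb]
  by (metis append_Nil append_Nil2 fp_word_simps(1))

lemma W_loop_R:
  assumes "q \<noteq> []" "successively adj q" "hd q = Inl g" "last q = Inl g" "g \<in> carrier G"
    "length (filter (\<lambda>v. \<not> isl v) q) \<le> 1" "length q \<le> Suc L"
  shows "W q \<in> Rb"
proof -
  have wf: "fp_word S I P (W q)" "F g (W q) = q" using W_F[OF assms(1-3)] assms(4) by auto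
  have cw: "cw (W q)" using fp_word_cw[OF wf(1) S_car] .
  have "Inl (g \<otimes> fp_eval G (W q)) = Inl g" using last_F[OF assms(5) cw] wf(2) assms(4) by simp
  then have e: "fp_eval G (W q) = \<one>" using assms(5) cw by simp
  have "length q = Suc (length (W q) + length (filter (\<lambda>x. \<not> isl x) (W q)))"
    using F_length[of g "W q"] wf(2) by simp
  moreover have "length (filter (\<lambda>x. \<not> isl x) (W q)) = length (filter (\<lambda>v. \<not> isl v) q)"
    using F_count[of g "W q"] wf(2) by simp
  ultimately show ?thesis using Rb_mem[OF wf(1) e] assms(6,7) by simp
qed

definition Qp :: "('a, 'i) vtx list \<Rightarrow> bool" where
  "Qp p \<longleftrightarrow> p \<noteq> [] \<and> successively adj p \<and> isl (hd p) \<and> isl (last p)"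

lemma succ_mid: "successively Q (u @ [a] @ v) \<longleftrightarrow> successively Q (u @ [a]) \<and> successively Q (a # v)"
  using succ_join[of Q u a v] succ_D1[of Q "u @ [a]" v] succ_D2[of Q u "[a] @ v"] by auto

lemma W_word: "Qp p \<Longrightarrow> fp_word S I P (W p)"
proof -
  assume "Qp p"
  then obtain g where "hd p = Inl g" unfolding Qp_def by (cases "hd p") auto
  then show ?thesis using W_F[of p g] \<open>Qp p\<close> unfolding Qp_def by auto
qed

lemma Qp_sub: "Qp (u @ [Inl g] @ v) \<Longrightarrow> Qp (u @ [Inl g]) \<and> Qp (Inl g # v)"
  unfolding Qp_def using succ_mid[of adj u "Inl g" v] by (cases u; cases v) auto

lemma cong_mid: "cong x y \<Longrightarrow> Qp (u @ [Inl g] @ v) \<Longrightarrow> fp_word S I P x \<Longrightarrow>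
  cong (W (u @ [Inl g]) @ x @ W (Inl g # v)) (W (u @ [Inl g]) @ y @ W (Inl g # v))"
  using Qp_sub[of u g v] W_word cong_ctx by blast

lemma step_Q:
  assumes "htpy_step adj (C1 l) p p'"
  shows "(Qp p \<longleftrightarrow> Qp p') \<and> (Qp p \<longrightarrow> cong (W p) (W p'))"
  using assms
proof cases
  case (backtrack a b u v)
  have ba: "adj b a" using backtrack adj_sym by blast
  have e1: "u @ [a, b, a] @ v = (u @ [a, b]) @ [a] @ v" by simp
  have sq: "successively adj p \<longleftrightarrow> successively adj p'"
    unfolding backtrack e1 succ_mid[of adj "u @ [a, b]" a v] succ_mid[of adj u a v]
    using backtrack ba by (auto simp: successively_append_iff)
  have hl1: "hd p = hd p'" using backtrack by (cases u) simp_all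
  have hl2: "last p = last p'" using backtrack by (cases v) simp_all
  note hl = hl1 hl2
  have QQ: "Qp p \<longleftrightarrow> Qp p'" unfolding Qp_def using sq hl backtrack by simp
  have "cong (W p) (W p')" if Q: "Qp p"
  proof (cases a)
    case (Inl g)
    have Q': "Qp (u @ [Inl g] @ ([b, Inl g] @ v))" using Q backtrack Inl by simp
    then have su: "successively adj (u @ [Inl g])" "u = [] \<or> isl (hd u)"
      using Qp_sub[OF Q'] unfolding Qp_def by (auto, cases u, auto)
    have w1: "W p = W (u @ [Inl g]) @ W (Inl g # b # Inl g # v)"
      using W_split[OF su, of "[b, Inl g] @ v"] backtrack Inl by simp
    have sgb: "successively adj ([Inl g, b] @ [Inl g])" using backtrack Inl ba by simp
    have w2: "W (Inl g # b # Inl g # v) = W [Inl g, b, Inl g] @ W (Inl g # v)"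
      using W_split[OF sgb, of v] by simp
    have w3: "W p' = W (u @ [Inl g]) @ [] @ W (Inl g # v)"
      using W_split[OF su, of v] backtrack Inl by simp
    have gc: "g \<in> carrier G" using adj_V[OF backtrack(3)] Inl by simp
    have cnt: "length (filter (\<lambda>v. \<not> isl v) [Inl g, b, Inl g]) \<le> 1" by simp
    have R: "W [Inl g, b, Inl g] \<in> Rb"
      by (rule W_loop_R[OF _ _ _ _ gc cnt]) (use sgb in \<open>auto simp: L_def\<close>)
    have Q'': "Qp (u @ [Inl g] @ v)" using QQ Q backtrack Inl by simp
    show ?thesis using cong_mid[OF cong_rel[OF R] Q''] Rb_props[OF R] w1 w2 w3 by simp
  next
    case (Inr A)
    obtain i B where A: "A = (i, B)" by force
    have une: "u \<noteq> []" using Q backtrack Inr unfolding Qp_def by auto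
    have vne: "v \<noteq> []" using Q backtrack Inr unfolding Qp_def by auto
    obtain u' x0 where u: "u = u' @ [x0]" using une by (metis append_butlast_last_id)
    obtain y0 v' where v: "v = y0 # v'" using vne by (cases v) auto
    have sp: "successively adj (u' @ [x0] @ [a, b, a] @ y0 # v')" using Q backtrack u v unfolding Qp_def by simp
    have ax: "adj x0 a" "adj a y0" using sp by (auto simp: successively_append_iff)
    obtain x where x: "x0 = Inl x" using ax Inr by (cases x0) auto
    obtain y where y: "y0 = Inl y" using ax Inr by (cases y0) auto
    obtain h where h: "b = Inl h" using backtrack Inr by (cases b) auto
    have c: "x \<in> carrier G" "y \<in> carrier G" "h \<in> carrier G"
      using adj_V[OF ax(1)] adj_V[OF ax(2)] adj_V[OF backtrack(3)] x y h by auto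
    have su: "successively adj (u' @ [Inl x])" "u' = [] \<or> isl (hd u')"
      using Q sp backtrack u x unfolding Qp_def by (auto simp: successively_append_iff, cases u', auto)
    have w1: "W p = W (u' @ [Inl x]) @ [Inr (i, inv x \<otimes> h), Inr (i, inv h \<otimes> y)] @ W (Inl y # v')"
      using W_split[OF su, of "[Inr A, Inl h, Inr A, Inl y] @ v'"] backtrack Inr A u v x y h by simp
    have w2: "W p' = W (u' @ [Inl x]) @ [Inr (i, inv x \<otimes> h \<otimes> (inv h \<otimes> y))] @ W (Inl y # v')"
      using W_split[OF su, of "[Inr A, Inl y] @ v'"] backtrack Inr A u v x y c by (simp add: m_assoc)
    have wp: "fp_word S I P (W p)" using W_word[OF Q] .
    then have wps: "fp_word S I P (W (u' @ [Inl x]))" "fp_word S I P [Inr (i, inv x \<otimes> h), Inr (i, inv h \<otimes> y)]"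
      "fp_word S I P (W (Inl y # v'))" unfolding w1 by simp_all
    have st: "fp_step G ([] @ [Inr (i, inv x \<otimes> h), Inr (i, inv h \<otimes> y)] @ []) ([] @ [Inr (i, inv x \<otimes> h \<otimes> (inv h \<otimes> y))] @ [])"
      by (rule fp_step.merge)
    have ip: "i \<in> I" "inv x \<otimes> h \<otimes> (inv h \<otimes> y) \<in> P i"
      using wps(2) subgroup.m_closed[OF subg] by auto
    have "cong [Inr (i, inv x \<otimes> h), Inr (i, inv h \<otimes> y)] [Inr (i, inv x \<otimes> h \<otimes> (inv h \<otimes> y))]"
      by (rule cong_equiv[OF fp_equiv_step]) (use st wps ip in auto)
    then show ?thesis unfolding w1 w2 using cong_ctx wps by blast
  qed
  then show ?thesis using QQ by blast
next
  case (cell c u v)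
  have cC: "c \<in> Cl l" "isl (hd c)" "length (filter (\<lambda>v. \<not> isl v) c) \<le> 1" using cell unfolding C1_def by auto
  note cD = Cl_D[OF cC(1)]
  obtain g c' where gc: "c = Inl g # c'" using cC(2) cD by (cases c; cases "hd c") auto
  have sc: "successively adj (Inl g # c' @ [Inl g])" using cD gc by simp
  have e1: "p' = u @ [Inl g] @ (c' @ [Inl g] @ v)" using cell gc by simp
  have e2: "Inl g # c' @ [Inl g] @ v = (Inl g # c') @ [Inl g] @ v" by simp
  have sq: "successively adj p \<longleftrightarrow> successively adj p'"
    unfolding e1 cell(1) gc succ_mid[of adj u "Inl g" "c' @ [Inl g] @ v"] e2 succ_mid[of adj "Inl g # c'" "Inl g" v]
    using sc succ_mid[of adj u "Inl g" v] by auto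
  have hl1: "hd p = hd p'" using cell gc by (cases u) simp_all
  have hl2: "last p = last p'" using cell gc by (cases v) simp_all
  note hl = hl1 hl2
  have QQ: "Qp p \<longleftrightarrow> Qp p'" unfolding Qp_def using sq hl cell by simp
  have "cong (W p) (W p')" if Q: "Qp p"
  proof -
    have Q1: "Qp (u @ [Inl g] @ v)" using Q cell gc by simp
    have su: "successively adj (u @ [Inl g])" "u = [] \<or> isl (hd u)"
      using Qp_sub[OF Q1] unfolding Qp_def by (auto, cases u, auto)
    have sc2: "successively adj ((Inl g # c') @ [Inl g])" using sc by simp
    have w1: "W p = W (u @ [Inl g]) @ [] @ W (Inl g # v)" using W_split[OF su, of v] cell gc by simp
    have w2: "W p' = W (u @ [Inl g]) @ W (Inl g # c' @ [Inl g]) @ W (Inl g # v)"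
      using W_split[OF su, of "c' @ [Inl g] @ v"] W_split[OF sc2, of v] e1 by simp
    have gcar: "g \<in> carrier G"
    proof (cases c')
      case Nil then show ?thesis using sc adj_V[of "Inl g" "Inl g"] by simp
    next
      case (Cons z zs) then show ?thesis using sc adj_V[of "Inl g" z] by simp
    qed
    have R: "W (Inl g # c' @ [Inl g]) \<in> Rb"
      by (rule W_loop_R) (use sc gcar cC(3) gc cD in \<open>auto simp: L_def\<close>)
    show ?thesis using cong_mid[OF cong_sym[OF cong_rel[OF R]] Q1] w1 w2 by simp
  qed
  then show ?thesis using QQ by blast
qed

lemma symclp_cong: "(symclp cong)\<^sup>*\<^sup>* x y \<Longrightarrow> cong x y"
  by (induction rule: rtranclp_induct) (auto elim!: symclpE intro: cong_trans cong_sym)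

lemma chain_cong: "edge_htpy adj (C1 l) p q \<Longrightarrow> Qp p \<Longrightarrow> cong (W p) (W q)"
proof -
  assume h: "edge_htpy adj (C1 l) p q" "Qp p"
  have "(symclp cong)\<^sup>*\<^sup>* (W p) (W q) \<and> Qp q"
  proof (rule rtranclp_symclp_lift_inv[where r="htpy_step adj (C1 l)" and Q=Qp])
    fix x y assume "htpy_step adj (C1 l) x y" "Qp x" "Qp y"
    then show "(symclp cong)\<^sup>*\<^sup>* (W x) (W y)" using step_Q by (blast intro: r_into_rtranclp symclpI1)
  next
    fix x y assume "htpy_step adj (C1 l) x y"
    then show "Qp x \<longleftrightarrow> Qp y" using step_Q by blast
  qed (use h in \<open>auto simp: edge_htpy_def\<close>)
  then show ?thesis using symclp_cong by blast
qed

lemma F_tl: "F g w = Inl g # tl (F g w)"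
  using hd_Cons_tl[OF F_ne, of g w] by simp

lemma letter_cong:
  assumes a: "fp_word S I P [Inl (s, b)]" and g: "g \<in> carrier G"
  shows "cong [Inl (s, b)] [lam g (g \<otimes> fp_letter_val G (Inl (s, b)))]"
proof -
  have s: "s \<in> S" "s \<in> carrier G" using a S_car by auto
  show ?thesis
  proof (cases b)
    case True then show ?thesis using s g by (simp add: lam_def)
  next
    case False
    note bF = False
    have e1: "inv g \<otimes> (g \<otimes> inv s) = inv s" using s g by simp
    have e2: "inv (g \<otimes> inv s) \<otimes> g = s" using s g by (simp add: inv_mult_group m_assoc)
    show ?thesis
    proof (cases "inv s \<in> S")
      case False
      then show ?thesis using bF e1 e2 by (simp add: lam_def)
    next
      case True
      have lam: "lam g (g \<otimes> fp_letter_val G (Inl (s, b))) = Inl (inv s, True)"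
        using bF e1 True by (simp add: lam_def)
      define r :: "('a, 'i) fp_letter list" where "r = [Inl (s, True), Inl (inv s, True)]"
      have rw: "fp_word S I P r" using True s r_def by simp
      have rR: "r \<in> Rb" by (rule Rb_mem) (use rw s in \<open>auto simp: r_def L_def\<close>)
      have 1: "cong ([Inl (s, False)] @ [] @ []) ([Inl (s, False)] @ r @ [])"
        by (rule cong_ctx[OF cong_sym[OF cong_rel[OF rR]]]) (use s in auto)
      have st: "fp_step G ([] @ [Inl (s, False), Inl (s, \<not> False)] @ [Inl (inv s, True)]) ([] @ [Inl (inv s, True)])"
        by (rule fp_step.cancel)
      have 2: "cong ([Inl (s, False)] @ r) [Inl (inv s, True)]"
        by (rule cong_equiv[OF fp_equiv_step]) (use st s True in \<open>auto simp: r_def\<close>)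
      have c1': "cong [Inl (s, False)] ([Inl (s, False)] @ r)" using 1 by simp
      show ?thesis using cong_trans[OF c1' 2] lam bF by simp
    qed
  qed
qed

lemma W_F_cong: "fp_word S I P w \<Longrightarrow> g \<in> carrier G \<Longrightarrow> cong w (W (F g w))"
proof (induction w arbitrary: g)
  case Nil then show ?case by simp
next
  case (Cons a w)
  have wa: "fp_word S I P [a]" "fp_word S I P w" using Cons.prems fp_word_Cons[where x=a and w=w] by simp_all
  have ca: "lcar a" using fp_word_cw[OF wa(1) S_car] by simp
  define g' where "g' = g \<otimes> fp_letter_val G a"
  have g': "g' \<in> carrier G" using g'_def ca Cons.prems by simp
  obtain t where t: "F g' w = Inl g' # t" using F_tl by blast
  obtain ll where ll: "W (F g (a # w)) = ll # W (F g' w)" "cong [a] [ll]" "fp_word S I P [ll]"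
  proof (cases a rule: lcar.cases)
    case (1 s b)
    have s: "s \<in> S" using wa 1 by simp
    have ad: "adj (Inl g) (Inl g')" using adj_step_Inl[OF Cons.prems(2) s] 1 g'_def by simp
    have "W (F g (a # w)) = W (Inl g # Inl g' # t)" using 1 t g'_def by simp
    also have "\<dots> = lam g g' # W (F g' w)" using t by simp
    finally show ?thesis using that letter_cong[OF wa(1)[unfolded 1] Cons.prems(2)] lam_props[OF ad] 1 g'_def by auto
  next
    case (2 i p)
    have pc: "p \<in> carrier G" using ca 2 by simp
    have "W (F g (a # w)) = W (Inl g # Inr (i, g <# P i) # Inl g' # t)" using 2 t g'_def by simp
    also have "\<dots> = Inr (i, p) # W (F g' w)" using t g'_def 2 pc Cons.prems by simp
    finally show ?thesis using that wa 2 by auto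
  qed
  have IH: "cong w (W (F g' w))" using Cons.IH[OF wa(2) g'] .
  have ww: "fp_word S I P (W (F g' w))" using W_F[of "F g' w" g'] F_path[OF wa(2) g'] last_F[OF g'] fp_word_cw[OF wa(2) S_car] by simp
  have 1: "cong ([a] @ w @ []) ([a] @ W (F g' w) @ [])" by (rule cong_ctx[OF IH]) (use wa in auto)
  have 2: "cong ([] @ [a] @ W (F g' w)) ([] @ [ll] @ W (F g' w))" by (rule cong_ctx[OF ll(2)]) (use ww in auto)
  have c1': "cong (a # w) ([a] @ W (F g' w))" using 1 by simp
  have c2': "cong ([a] @ W (F g' w)) (ll # W (F g' w))" using 2 by simp
  show ?case using cong_trans[OF c1' c2'] ll(1) by simp
qed

theorem bwd_rfp: "rel_fin_presented G I P"
  unfolding rel_fin_presented_def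
proof (intro exI conjI)
  show "finite S" by (rule finS)
  show "S \<subseteq> carrier G" by (rule S_car)
  show "\<forall>g \<in> carrier G. \<exists>w. fp_word S I P w \<and> fp_eval G w = g" using sig sw_word by blast
  show "finite Rb" by (rule fin_Rb)
  show "\<forall>r \<in> Rb. fp_word S I P r" using Rb_props by blast
  show "\<forall>w. fp_word S I P w \<longrightarrow> (fp_eval G w = \<one>) = (w \<in> NCs)"
  proof (intro allI impI iffI)
    fix w assume w: "fp_word S I P w" "fp_eval G w = \<one>"
    define p0 where "p0 = F \<one> w"
    have cw: "cw w" using fp_word_cw[OF w(1) S_car] .
    have fp: "successively adj p0" "set p0 \<subseteq> V" using F_path[OF w(1) one_closed] p0_def by auto
    have hl: "hd p0 = Inl \<one>" "last p0 = Inl \<one>" using last_F[OF one_closed cw] w(2) p0_def by auto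
    have ep: "edge_path V adj p0" unfolding edge_path_succ using fp p0_def by simp
    have "edge_htpy adj (Cl l) p0 [hd p0]" using SC ep hl unfolding complex_simply_connected_def by auto
    then have h: "edge_htpy adj (C1 l) p0 [Inl \<one>]" using htpy_C1 hl by simp
    have Q: "Qp p0" unfolding Qp_def using fp hl p0_def by simp
    have "cong (W p0) (W [Inl \<one>])" by (rule chain_cong[OF h Q])
    then have c1: "cong (W p0) []" by simp
    have "cong w (W p0)" unfolding p0_def by (rule W_F_cong[OF w(1) one_closed])
    then show "w \<in> NCs" using cong_NC cong_trans c1 by blast
  next
    fix w assume "w \<in> NCs"
    then show "fp_eval G w = \<one>" by (rule NC_eval)
  qed
qed

end


theorem proposition4p11:
  fixes G :: "('a, 'b) monoid_scheme" and I :: "'i set" and P :: "'i \<Rightarrow> 'a set" and S :: "'a set"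
  assumes "group G"
    and "finite I" and "I \<noteq> {}"
    and "\<forall>i \<in> I. subgroup (P i) G"
    and "finite S" and "S \<subseteq> carrier G" and "generate G S = carrier G"
  shows "rel_fin_presented G I P \<longleftrightarrow> coarsely_unicone_simply_connected G I P S"
proof -
  have cp: "cpair G I P S"
    by (intro cpair.intro cpair_axioms.intro) (use assms in auto)
  have cp2: "cpair2 G I P S"
    by (intro cpair2.intro cp cpair2_axioms.intro assms(5,7))
  interpret cpair2 G I P S by (rule cp2)
  show ?thesis
  proof
    assume "rel_fin_presented G I P"
    then obtain S' R where h: "finite S'" "S' \<subseteq> carrier G"
        "\<forall>g \<in> carrier G. \<exists>w. fp_word S' I P w \<and> fp_eval G w = g"
        "finite R" "\<forall>r \<in> R. fp_word S' I P r"
        "\<forall>w. fp_word S' I P w \<longrightarrow> (fp_eval G w = \<one>\<^bsub>G\<^esub> \<longleftrightarrow> w \<in> fp_normal_closure G S' I P R)"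
      unfolding rel_fin_presented_def by blast
    have fw: "fwd G I P S S' R"
      by (intro fwd.intro cp2 fwd_axioms.intro) (use h in auto)
    interpret fwd G I P S S' R by (rule fw)
    show "coarsely_unicone_simply_connected G I P S"
      unfolding coarsely_unicone_simply_connected_def using fwd_SC by blast
  next
    assume "coarsely_unicone_simply_connected G I P S"
    then obtain l where "complex_simply_connected (coned_V G I P) (coned_adj G I P S) (unicone_cells G I P S l)"
      unfolding coarsely_unicone_simply_connected_def by blast
    then have bw: "bwd G I P S l"
      by (intro bwd.intro cp2 bwd_axioms.intro assms(2))
    interpret bwd G I P S l by (rule bw)
    show "rel_fin_presented G I P" by (rule bwd_rfp)
  qed
qed


end
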